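(* Let $\vec p,\vec s$ be $n$-tuples with entries in $[1,\infty]$, $1\le\alpha\le\infty$, and $\frac1n\sum_{i=1}^n\frac1{s_i}\le\frac1\alpha\le\frac1n\sum_{i=1}^n\frac1{p_i}$. Then, as sets, $$(L^{\vec p},L^{\vec s})(\mathbb R^n)=(L^{\vec p},\ell^{\vec s})(\mathbb R^n)\quad\text{and}\quad (L^{\vec p},L^{\vec s})^{\alpha}(\mathbb R^n)=(L^{\vec p},\ell^{\vec s})^{\alpha}(\mathbb R^n).$$
   Context: For $\vec p=(p_1,\dots,p_n)$ with $1\le p_i\le\infty$, $\|f\|_{L^{\vec p}}=\Big(\int_{\mathbb R}\cdots\Big(\int_{\mathbb R}|f(x)|^{p_1}\,dx_1\Big)^{p_2/p_1}\cdots dx_n\Big)^{1/p_n}$ (usual modification when some $p_i=\infty$). $B(y,r)$ is the open ball of center $y$, radius $r$; $\chi_E$ is the characteristic function of $E$. Continuous spaces: $(L^{\vec p},L^{\vec s})$ is the set of $f\in L^1_{loc}(\mathbb R^n)$ with $\big\|\,y\mapsto\|f\chi_{B(y,1)}\|_{L^{\vec p}}\big\|_{L^{\vec s}}<\infty$; $(L^{\vec p},L^{\vec s})^{\alpha}$ is the set of $f\in L^1_{loc}$ with $\sup_{r>0}\big\|\,y\mapsto |B(y,r)|^{\frac1\alpha-\frac1n\sum_i\frac1{p_i}-\frac1n\sum_i\frac1{s_i}}\|f\chi_{B(y,r)}\|_{L^{\vec p}}\big\|_{L^{\vec s}}<\infty$. Discrete spaces: for $r>0$, $k\in\mathbb Z^n$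 let $Q_{r,k}=r(k+[0,1)^n)$; for $\{a_k\}_{k\in\mathbb Z^n}$ let $\|\{a_k\}\|_{\ell^{\vec s}}=\Big(\sum_{k_n\in\mathbb Z}\cdots\Big(\sum_{k_1\in\mathbb Z}|a_k|^{s_1}\Big)^{s_2/s_1}\cdots\Big)^{1/s_n}$ (usual modification for $s_i=\infty$). Set ${}_r\|f\|_{\vec p,\vec s}=\big\|\{\|f\chi_{Q_{r,k}}\|_{L^{\vec p}}\}_{k\in\mathbb Z^n}\big\|_{\ell^{\vec s}}$, $\|f\|_{\vec p,\vec s}={}_1\|f\|_{\vec p,\vec s}$ and $\|f\|_{\vec p,\vec s,\alpha}=\sup_{r>0}r^{\frac n\alpha-\sum_{i=1}^n\frac1{p_i}}\,{}_r\|f\|_{\vec p,\vec s}$. Then $(L^{\vec p},\ell^{\vec s})$ (resp. $(L^{\vec p},\ell^{\vec s})^{\alpha}$) is the set of $f\in L^1_{loc}(\mathbb R^n)$ with $\|f\|_{\vec p,\vec s}<\infty$ (resp. $\|f\|_{\vec p,\vec s,\alpha}<\infty$). *)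

theory Defs
  imports "HOL-Analysis.Analysis"
begin

text \<open>Points of R^n are represented as extensional functions nat => real on {..<n}
  (carrier PiE {..<n} UNIV); coordinate i (0-based) corresponds to x_(i+1) of the paper.
  Exponents are extended reals in [1,infinity] (type ennreal, infinity = top).\<close>

definition lebn :: "nat \<Rightarrow> (nat \<Rightarrow> real) measure" where
  "lebn n = completion (PiM {..<n} (\<lambda>_. lborel))"

definition origin :: "nat \<Rightarrow> nat \<Rightarrow> 'a::zero" where
  "origin n = (\<lambda>i. if i < n then 0 else undefined)"

definition epow :: "ennreal \<Rightarrow> real \<Rightarrow> ennreal" where
  "epow v q = (if v = top then top else ennreal (enn2real v powr q))"

definition einv :: "ennreal \<Rightarrow> real" where
  "einv p = (if p = top then 0 else 1 / enn2real p)"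

definition ess_sup :: "'a measure \<Rightarrow> ('a \<Rightarrow> ennreal) \<Rightarrow> ennreal" where
  "ess_sup M g = Inf {z. AE t in M. g t \<le> z}"

text \<open>Iterated mixed Lebesgue norm: integrates out coordinates 0,...,k-1 (innermost first).\<close>
fun mixL_aux :: "nat \<Rightarrow> (nat \<Rightarrow> ennreal) \<Rightarrow> ((nat \<Rightarrow> real) \<Rightarrow> ennreal) \<Rightarrow> (nat \<Rightarrow> real) \<Rightarrow> ennreal" where
  "mixL_aux 0 p g x = g x"
| "mixL_aux (Suc k) p g x =
     (if p k = top then ess_sup lebesgue (\<lambda>t. mixL_aux k p g (x(k := t)))
      else epow (\<integral>\<^sup>+ t. epow (mixL_aux k p g (x(k := t))) (enn2real (p k)) \<partial>lebesgue)
                (1 / enn2real (p k)))"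

definition mixL :: "nat \<Rightarrow> (nat \<Rightarrow> ennreal) \<Rightarrow> ((nat \<Rightarrow> real) \<Rightarrow> ennreal) \<Rightarrow> ennreal" where
  "mixL n p g = mixL_aux n p g (origin n)"

definition normL :: "nat \<Rightarrow> (nat \<Rightarrow> ennreal) \<Rightarrow> ((nat \<Rightarrow> real) \<Rightarrow> real) \<Rightarrow> ennreal" where
  "normL n p f = mixL n p (\<lambda>x. ennreal \<bar>f x\<bar>)"

fun mixl_aux :: "nat \<Rightarrow> (nat \<Rightarrow> ennreal) \<Rightarrow> ((nat \<Rightarrow> int) \<Rightarrow> ennreal) \<Rightarrow> (nat \<Rightarrow> int) \<Rightarrow> ennreal" where
  "mixl_aux 0 s a k = a k"
| "mixl_aux (Suc j) s a k =
     (if s j = top then (SUP t. mixl_aux j s a (k(j := t)))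
      else epow (\<integral>\<^sup>+ t. epow (mixl_aux j s a (k(j := t))) (enn2real (s j)) \<partial>count_space UNIV)
                (1 / enn2real (s j)))"

definition mixl :: "nat \<Rightarrow> (nat \<Rightarrow> ennreal) \<Rightarrow> ((nat \<Rightarrow> int) \<Rightarrow> ennreal) \<Rightarrow> ennreal" where
  "mixl n s a = mixl_aux n s a (origin n)"

definition balln :: "nat \<Rightarrow> (nat \<Rightarrow> real) \<Rightarrow> real \<Rightarrow> (nat \<Rightarrow> real) set" where
  "balln n y r = {x \<in> PiE {..<n} (\<lambda>_. UNIV). sqrt (\<Sum>i<n. (x i - y i)^2) < r}"

definition cuben :: "nat \<Rightarrow> real \<Rightarrow> (nat \<Rightarrow> int) \<Rightarrow> (nat \<Rightarrow> real) set" where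
  "cuben n r k = {x \<in> PiE {..<n} (\<lambda>_. UNIV). \<forall>i<n. r * of_int (k i) \<le> x i \<and> x i < r * (of_int (k i) + 1)}"

definition L1_loc :: "nat \<Rightarrow> ((nat \<Rightarrow> real) \<Rightarrow> real) \<Rightarrow> bool" where
  "L1_loc n f \<longleftrightarrow> f \<in> borel_measurable (lebn n) \<and>
     (\<forall>y\<in>PiE {..<n} (\<lambda>_. UNIV). \<forall>r>0. set_integrable (lebn n) (balln n y r) f)"

definition amalgamLL :: "nat \<Rightarrow> (nat \<Rightarrow> ennreal) \<Rightarrow> (nat \<Rightarrow> ennreal) \<Rightarrow> ((nat \<Rightarrow> real) \<Rightarrow> real) set" where
  "amalgamLL n p s = {f. L1_loc n f \<and>
     mixL n s (\<lambda>y. normL n p (\<lambda>x. f x * indicator (balln n y 1) x)) < top}"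

definition amalgamLL_alpha :: "nat \<Rightarrow> (nat \<Rightarrow> ennreal) \<Rightarrow> (nat \<Rightarrow> ennreal) \<Rightarrow> ennreal \<Rightarrow> ((nat \<Rightarrow> real) \<Rightarrow> real) set" where
  "amalgamLL_alpha n p s \<alpha> = {f. L1_loc n f \<and>
     (SUP r\<in>{0<..}. mixL n s (\<lambda>y.
        ennreal (measure (lebn n) (balln n y r) powr
                   (einv \<alpha> - (\<Sum>i<n. einv (p i)) / n - (\<Sum>i<n. einv (s i)) / n))
        * normL n p (\<lambda>x. f x * indicator (balln n y r) x))) < top}"

definition rnorm :: "nat \<Rightarrow> (nat \<Rightarrow> ennreal) \<Rightarrow> (nat \<Rightarrow> ennreal) \<Rightarrow> real \<Rightarrow> ((nat \<Rightarrow> real) \<Rightarrow> real) \<Rightarrow> ennreal" where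
  "rnorm n p s r f = mixl n s (\<lambda>k. normL n p (\<lambda>x. f x * indicator (cuben n r k) x))"

definition amalgamLl :: "nat \<Rightarrow> (nat \<Rightarrow> ennreal) \<Rightarrow> (nat \<Rightarrow> ennreal) \<Rightarrow> ((nat \<Rightarrow> real) \<Rightarrow> real) set" where
  "amalgamLl n p s = {f. L1_loc n f \<and> rnorm n p s 1 f < top}"

definition amalgamLl_alpha :: "nat \<Rightarrow> (nat \<Rightarrow> ennreal) \<Rightarrow> (nat \<Rightarrow> ennreal) \<Rightarrow> ennreal \<Rightarrow> ((nat \<Rightarrow> real) \<Rightarrow> real) set" where
  "amalgamLl_alpha n p s \<alpha> = {f. L1_loc n f \<and>
     (SUP r\<in>{0<..}. ennreal (r powr (real n * einv \<alpha> - (\<Sum>i<n. einv (p i)))) * rnorm n p s r f) < top}"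

end

theory Submission
  imports Defs "HOL-Probability.Essential_Supremum"
begin

lemma epow_top[simp]: "epow top q = top" by (simp add: epow_def)
lemma epow_0[simp]: "q > 0 \<Longrightarrow> epow 0 q = 0" by (simp add: epow_def)
lemma epow_ennreal: "x \<ge> 0 \<Longrightarrow> epow (ennreal x) q = ennreal (x powr q)"
  by (simp add: epow_def)

lemma epow_mono:
  assumes "a \<le> b" "q > 0" shows "epow a q \<le> epow b q"
proof (cases "b = top")
  case True then show ?thesis by simp
next
  case False
  then have "a \<noteq> top" using assms top_unique by auto
  then show ?thesis using False assms
    by (cases a; cases b) (auto simp: epow_def intro!: ennreal_leI powr_mono2)
qed

lemma epow_1[simp]: "epow a 1 = a"
  by (cases a) (auto simp: epow_def)

lemma epow_mult:
  assumes "q > 0" shows "epow (a * b) q = epow a q * epow b q"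
proof (cases "a = top \<or> b = top")
  case True
  then show ?thesis using assms
    apply (cases a; cases b)
    apply (auto simp: epow_def ennreal_mult_top ennreal_top_mult)
    done
next
  case False
  then obtain x y where xy: "a = ennreal x" "b = ennreal y" "x \<ge> 0" "y \<ge> 0"
    by (metis ennreal_cases)
  have "a * b = ennreal (x * y)" using xy by (simp add: ennreal_mult)
  then have "epow (a * b) q = ennreal ((x * y) powr q)" using xy by (simp add: epow_ennreal)
  also have "\<dots> = ennreal (x powr q) * ennreal (y powr q)"
    using xy by (simp add: powr_mult ennreal_mult)
  finally show ?thesis using xy by (simp add: epow_ennreal)
qed

lemma epow_epow:
  assumes "q > 0" "q' > 0" shows "epow (epow a q) q' = epow a (q * q')"
  using assms by (cases a) (auto simp: epow_def powr_powr)

lemma epow_pos: "q > 0 \<Longrightarrow> a > 0 \<Longrightarrow> epow a q > 0"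
  by (cases a) (auto simp: epow_def)

lemma epow_eq_0_iff: "q > 0 \<Longrightarrow> epow a q = 0 \<longleftrightarrow> a = 0"
  by (cases a) (auto simp: epow_def)

lemma epow_add_le:
  assumes "q > 0" shows "epow (a + b) q \<le> epow 2 q * (epow a q + epow b q)"
proof -
  have "a + b \<le> 2 * max a b"
    by (metis add_mono max.cobounded1 max.cobounded2 mult_2)
  then have "epow (a + b) q \<le> epow (2 * max a b) q" using epow_mono assms by blast
  also have "\<dots> = epow 2 q * epow (max a b) q" using epow_mult assms by blast
  also have "epow (max a b) q \<le> epow a q + epow b q"
    by (cases "a \<le> b") (auto simp: max_def intro: add_increasing add_increasing2)
  then have "epow 2 q * epow (max a b) q \<le> epow 2 q * (epow a q + epow b q)"
    by (rule mult_left_mono) simp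
  finally show ?thesis .
qed

lemma epow_2_inv_le:
  assumes "q \<ge> 1" shows "epow 2 (1 / q) \<le> 2"
proof -
  have "(2::real) powr (1/q) \<le> 2 powr 1"
    using assms by (intro powr_mono) auto
  then show ?thesis
    by (simp add: epow_def) (metis ennreal_leI ennreal_numeral)
qed

lemma epow_measurable[measurable]:
  assumes [measurable]: "f \<in> borel_measurable M"
  shows "(\<lambda>x. epow (f x) q) \<in> borel_measurable M"
  unfolding epow_def by measurable

definition phi :: "'a measure \<Rightarrow> ennreal \<Rightarrow> ('a \<Rightarrow> ennreal) \<Rightarrow> ennreal" where
  "phi M q G = (if q = top then ess_sup M G
     else epow (\<integral>\<^sup>+ t. epow (G t) (enn2real q) \<partial>M) (1 / enn2real q))"

lemma ess_sup_count_space: "ess_sup (count_space UNIV) G = (SUP t. G t)"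
  unfolding ess_sup_def AE_count_space
  by (rule antisym) (auto intro!: Inf_lower Inf_greatest SUP_upper SUP_least)

lemma mixL_aux_Suc_phi:
  "mixL_aux (Suc k) p g x = phi lebesgue (p k) (\<lambda>t. mixL_aux k p g (x(k := t)))"
  by (simp add: phi_def)

lemma mixl_aux_Suc_phi:
  "mixl_aux (Suc j) s a k = phi (count_space UNIV) (s j) (\<lambda>t. mixl_aux j s a (k(j := t)))"
  by (simp add: phi_def ess_sup_count_space)

lemma q_real_ge1: "1 \<le> q \<Longrightarrow> q \<noteq> top \<Longrightarrow> 1 \<le> enn2real q"
  using enn2real_mono[of 1 q] by (simp add: less_top)

lemma ess_sup_mono:
  assumes "\<And>t. t \<in> space M \<Longrightarrow> G t \<le> H t"
  shows "ess_sup M G \<le> ess_sup M H"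
  unfolding ess_sup_def
proof (rule Inf_mono)
  fix z assume "z \<in> {z. AE t in M. H t \<le> z}"
  then have H: "AE t in M. H t \<le> z" by simp
  have "AE t in M. G t \<le> z"
    using H AE_space by eventually_elim (use assms order_trans in blast)
  then show "\<exists>z'\<in>{z. AE t in M. G t \<le> z}. z' \<le> z" by auto
qed

lemma ess_sup_AE:
  assumes "G \<in> borel_measurable M" shows "AE t in M. G t \<le> ess_sup M G"
proof -
  have "ess_sup M G = esssup M G" using esssup_eq_AE[OF assms] by (simp add: ess_sup_def)
  then show ?thesis using esssup_AE[of G M] by simp
qed

lemma ess_sup_le: "AE t in M. G t \<le> z \<Longrightarrow> ess_sup M G \<le> z"
  unfolding ess_sup_def by (rule Inf_lower) simp

lemma phi_mono:
  assumes "1 \<le> q" "\<And>t. t \<in> space M \<Longrightarrow> G t \<le> H t"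
  shows "phi M q G \<le> phi M q H"
proof (cases "q = top")
  case True then show ?thesis using assms by (simp add: phi_def ess_sup_mono)
next
  case False
  then have Q: "enn2real q \<ge> 1" using q_real_ge1 assms by blast
  show ?thesis using False Q assms
    by (auto simp: phi_def intro!: epow_mono nn_integral_mono)
qed

lemma ess_sup_cmult_le:
  assumes "G \<in> borel_measurable M"
  shows "ess_sup M (\<lambda>t. c * G t) \<le> c * ess_sup M G"
  using ess_sup_AE[OF assms]
  by (intro ess_sup_le) (auto elim!: eventually_mono intro: mult_left_mono)

lemma ess_sup_cmult:
  assumes [measurable]: "G \<in> borel_measurable M" and "c < top"
  shows "ess_sup M (\<lambda>t. c * G t) = c * ess_sup M G"
proof (cases "c = 0")
  case True
  then show ?thesis using ess_sup_cmult_le[OF assms(1), of 0] by simp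
next
  case False
  then obtain x where x: "c = ennreal x" "x > 0" using assms(2)
    by (cases c) (auto simp: top_unique)
  have eq: "ennreal (1/x) * (c * G t) = G t" for t
    using x by (simp add: mult.assoc[symmetric] ennreal_mult[symmetric])
  have "ess_sup M G = ess_sup M (\<lambda>t. ennreal (1/x) * (c * G t))" by (simp only: eq)
  also have "\<dots> \<le> ennreal (1/x) * ess_sup M (\<lambda>t. c * G t)"
    by (rule ess_sup_cmult_le) measurable
  finally have "c * ess_sup M G \<le> c * (ennreal (1/x) * ess_sup M (\<lambda>t. c * G t))"
    by (rule mult_left_mono) simp
  also have "\<dots> = ess_sup M (\<lambda>t. c * G t)"
    using x by (simp add: mult.assoc[symmetric] ennreal_mult[symmetric])
  finally show ?thesis using ess_sup_cmult_le[OF assms(1)] by (intro antisym)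
qed

lemma phi_cmult:
  assumes [measurable]: "G \<in> borel_measurable M" and "c < top" and "1 \<le> q"
  shows "phi M q (\<lambda>t. c * G t) = c * phi M q G"
proof (cases "q = top")
  case True then show ?thesis using assms by (simp add: phi_def ess_sup_cmult)
next
  case False
  define Q where "Q = enn2real q"
  then have Q: "Q \<ge> 1" using q_real_ge1 assms False by blast
  have "phi M q (\<lambda>t. c * G t) = epow (\<integral>\<^sup>+ t. epow c Q * epow (G t) Q \<partial>M) (1 / Q)"
    using False Q by (simp add: phi_def Q_def epow_mult)
  also have "\<dots> = epow (epow c Q * (\<integral>\<^sup>+ t. epow (G t) Q \<partial>M)) (1 / Q)"
    by (subst nn_integral_cmult) measurable
  also have "\<dots> = epow (epow c Q) (1/Q) * epow (\<integral>\<^sup>+ t. epow (G t) Q \<partial>M) (1 / Q)"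
    using Q by (simp add: epow_mult)
  also have "epow (epow c Q) (1/Q) = c" using Q by (simp add: epow_epow)
  finally show ?thesis using False by (simp add: phi_def Q_def)
qed

lemma ess_sup_add:
  assumes "G \<in> borel_measurable M" "H \<in> borel_measurable M"
  shows "ess_sup M (\<lambda>t. G t + H t) \<le> ess_sup M G + ess_sup M H"
  apply (rule ess_sup_le)
  using ess_sup_AE[OF assms(1)] ess_sup_AE[OF assms(2)]
  by eventually_elim (rule add_mono)

lemma phi_add:
  assumes [measurable]: "G \<in> borel_measurable M" "H \<in> borel_measurable M" and "1 \<le> q"
  shows "phi M q (\<lambda>t. G t + H t) \<le> 4 * (phi M q G + phi M q H)"
proof (cases "q = top")
  case True
  then have "phi M q (\<lambda>t. G t + H t) \<le> phi M q G + phi M q H"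
    using assms by (simp add: phi_def ess_sup_add)
  also have "\<dots> \<le> 4 * (phi M q G + phi M q H)"
    using mult_right_mono[of 1 4 "phi M q G + phi M q H"] by simp
  finally show ?thesis .
next
  case False
  define Q where "Q = enn2real q"
  then have Q: "Q \<ge> 1" using q_real_ge1 assms False by blast
  define X where "X = (\<integral>\<^sup>+ t. epow (G t) Q \<partial>M)"
  define Y where "Y = (\<integral>\<^sup>+ t. epow (H t) Q \<partial>M)"
  have "(\<integral>\<^sup>+ t. epow (G t + H t) Q \<partial>M) \<le> (\<integral>\<^sup>+ t. epow 2 Q * (epow (G t) Q + epow (H t) Q) \<partial>M)"
    using Q by (intro nn_integral_mono epow_add_le) auto
  also have "\<dots> = epow 2 Q * (X + Y)"
    unfolding X_def Y_def by (subst nn_integral_cmult; (subst nn_integral_add)?) measurable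
  finally have "epow (\<integral>\<^sup>+ t. epow (G t + H t) Q \<partial>M) (1/Q) \<le> epow (epow 2 Q * (X + Y)) (1/Q)"
    using Q by (intro epow_mono) auto
  also have "\<dots> = 2 * epow (X + Y) (1/Q)"
    using Q by (simp add: epow_mult epow_epow)
  finally have 1: "epow (\<integral>\<^sup>+ t. epow (G t + H t) Q \<partial>M) (1/Q) \<le> 2 * epow (X + Y) (1/Q)" .
  have "epow (X + Y) (1/Q) \<le> epow 2 (1/Q) * (epow X (1/Q) + epow Y (1/Q))"
    using Q by (intro epow_add_le) auto
  also have "\<dots> \<le> 2 * (epow X (1/Q) + epow Y (1/Q))"
    using epow_2_inv_le[OF Q] by (rule mult_right_mono) simp
  finally have 2: "epow (X + Y) (1/Q) \<le> 2 * (epow X (1/Q) + epow Y (1/Q))" .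
  have "epow (\<integral>\<^sup>+ t. epow (G t + H t) Q \<partial>M) (1/Q) \<le> 2 * (2 * (epow X (1/Q) + epow Y (1/Q)))"
    using 1 2 by (meson mult_left_mono order_trans zero_le)
  also have "\<dots> = 4 * (epow X (1/Q) + epow Y (1/Q))"
    by (simp add: mult.assoc[symmetric])
  finally have calc: "epow (\<integral>\<^sup>+ t. epow (G t + H t) Q \<partial>M) (1/Q) \<le> 4 * (epow X (1/Q) + epow Y (1/Q))" .
  have e1: "phi M q (\<lambda>t. G t + H t) = epow (\<integral>\<^sup>+ t. epow (G t + H t) Q \<partial>M) (1/Q)"
    using False unfolding phi_def Q_def by simp
  have e2: "phi M q G = epow X (1/Q)" "phi M q H = epow Y (1/Q)"
    using False by (simp_all only: phi_def Q_def X_def Y_def if_False)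
  show ?thesis unfolding e1 e2 by (rule calc)
qed

lemma phi_top_indicator:
  assumes "A \<in> sets M" "1 \<le> q"
  shows "phi M q (\<lambda>t. top * indicator A t) = (if emeasure M A = 0 then 0 else top)"
proof (cases "q = top")
  case True
  have meas: "(\<lambda>t. top * indicator A t :: ennreal) \<in> borel_measurable M" using assms by measurable
  show ?thesis
  proof (cases "emeasure M A = 0")
    case True
    then have "AE t in M. t \<notin> A" using assms AE_not_in[of A M] by auto
    then have "AE t in M. top * indicator A t \<le> (0::ennreal)"
      by eventually_elim simp
    then have "ess_sup M (\<lambda>t. top * indicator A t) \<le> 0" by (rule ess_sup_le)
    then show ?thesis using \<open>q = top\<close> True by (simp add: phi_def)
  next
    case False
    have "ess_sup M (\<lambda>t. top * indicator A t) = top"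
    proof (rule ccontr)
      assume ne: "ess_sup M (\<lambda>t. top * indicator A t) \<noteq> top"
      have "AE t in M. top * indicator A t \<le> ess_sup M (\<lambda>t. top * indicator A t)"
        by (rule ess_sup_AE[OF meas])
      then have "AE t in M. t \<notin> A"
        by eventually_elim (use ne in \<open>auto simp: indicator_def top_unique\<close>)
      moreover have eqA: "{x\<in>space M. \<not> (x \<notin> A)} = A"
        using sets.sets_into_space[OF assms(1)] by auto
      ultimately have "emeasure M A = 0"
        using AE_iff_measurable[OF assms(1) eqA] by simp
      then show False using False by simp
    qed
    then show ?thesis using \<open>q = top\<close> False by (simp add: phi_def)
  qed
next
  case False
  define Q where "Q = enn2real q"
  then have Q: "Q \<ge> 1" using q_real_ge1 assms False by blast
  have "(\<lambda>t. epow (top * indicator A t) Q) = (\<lambda>t. top * indicator A t)"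
    using Q by (auto simp: indicator_def fun_eq_iff)
  then have "phi M q (\<lambda>t. top * indicator A t) = epow (top * emeasure M A) (1/Q)"
    using False assms by (simp add: phi_def Q_def nn_integral_cmult_indicator)
  then show ?thesis using Q by (auto simp: ennreal_top_mult)
qed

abbreviation PP :: "nat \<Rightarrow> (nat \<Rightarrow> real) measure" where
  "PP n \<equiv> PiM {..<n} (\<lambda>_. lborel)"

lemma space_PP: "space (PP n) = PiE {..<n} (\<lambda>_. UNIV)"
  by (simp add: space_PiM)

lemma upd_in_space: "x \<in> space (PP n) \<Longrightarrow> k < n \<Longrightarrow> x(k := t) \<in> space (PP n)"
  by (auto simp: space_PP PiE_iff extensional_def)

lemma meas_upd:
  assumes "k < n"
  shows "(\<lambda>(x, t). x(k := t)) \<in> measurable (PP n \<Otimes>\<^sub>M lborel) (PP n)"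
proof -
  have "insert k {..<n} = {..<n}" using assms by auto
  then show ?thesis using measurable_add_dim[of k "{..<n}" "\<lambda>_. lborel"] by simp
qed

lemma meas_upd1:
  assumes "k < n" "x \<in> space (PP n)"
  shows "(\<lambda>t. x(k := t)) \<in> measurable lborel (PP n)"
proof -
  have "(\<lambda>t. (x, t)) \<in> measurable lborel (PP n \<Otimes>\<^sub>M lborel)"
    using assms(2) by measurable
  from measurable_comp[OF this meas_upd[OF assms(1)]] show ?thesis by (simp add: o_def)
qed

lemma L_mono:
  assumes "\<And>y. y \<in> space (PP n) \<Longrightarrow> g y \<le> h y" "\<forall>i<k. 1 \<le> p i" "k \<le> n" "x \<in> space (PP n)"
  shows "mixL_aux k p g x \<le> mixL_aux k p h x"
  using assms(2-)
proof (induction k arbitrary: x)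
  case 0 then show ?case using assms(1) by simp
next
  case (Suc k)
  show ?case unfolding mixL_aux_Suc_phi
    using Suc by (intro phi_mono) (auto intro!: Suc.IH upd_in_space)
qed

lemma L_dep:
  assumes "\<forall>i\<ge>k. x i = x' i"
  shows "mixL_aux k p g x = mixL_aux k p g x'"
  using assms
proof (induction k arbitrary: x x')
  case 0
  then have "x = x'" by auto
  then show ?case by simp
next
  case (Suc k)
  have "mixL_aux k p g (x(k := t)) = mixL_aux k p g (x'(k := t))" for t
    using Suc.prems by (intro Suc.IH) auto
  then show ?case unfolding mixL_aux_Suc_phi by simp
qed

lemma ess_sup_le_iff:
  assumes "G \<in> borel_measurable M"
  shows "ess_sup M G \<le> y \<longleftrightarrow> (AE t in M. G t \<le> y)"
  using ess_sup_le[where M=M and G=G and z=y] ess_sup_AE[OF assms]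
  by (auto elim: eventually_mono intro: order_trans)

lemma L_meas:
  assumes "g \<in> borel_measurable (PP n)" "\<forall>i<k. 1 \<le> p i" "k \<le> n"
  shows "mixL_aux k p g \<in> borel_measurable (PP n)"
  using assms(2-)
proof (induction k)
  case 0 then show ?case using assms(1) by simp
next
  case (Suc k)
  have IH[measurable]: "mixL_aux k p g \<in> borel_measurable (PP n)" using Suc by auto
  have kn: "k < n" using Suc by auto
  define F where "F = (\<lambda>x t. mixL_aux k p g (x(k := t)))"
  have F[measurable]: "case_prod F \<in> borel_measurable (PP n \<Otimes>\<^sub>M lborel)"
    unfolding F_def using measurable_comp[OF meas_upd[OF kn] IH]
    by (simp add: o_def case_prod_beta')
  have F1: "F x \<in> borel_measurable lborel" if "x \<in> space (PP n)" for x
    unfolding F_def using measurable_comp[OF meas_upd1[OF kn that] IH] by (simp add: o_def)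
  show ?case
  proof (cases "p k = top")
    case False
    have "(\<lambda>x. \<integral>\<^sup>+ t. epow (F x t) (enn2real (p k)) \<partial>lborel) \<in> borel_measurable (PP n)"
      by measurable
    then have "(\<lambda>x. epow (\<integral>\<^sup>+ t. epow (F x t) (enn2real (p k)) \<partial>lebesgue) (1 / enn2real (p k)))
        \<in> borel_measurable (PP n)"
      by (simp add: nn_integral_completion)
    then show ?thesis using False by (simp add: F_def)
  next
    case True
    have "(\<lambda>x. ess_sup lebesgue (F x)) \<in> borel_measurable (PP n)"
    proof (rule borel_measurableI_le)
      fix y
      let ?Q = "{xt \<in> space (PP n \<Otimes>\<^sub>M lborel). y < case_prod F xt}"
      have Q: "?Q \<in> sets (PP n \<Otimes>\<^sub>M lborel)" by measurable
      have "{x \<in> space (PP n). ess_sup lebesgue (F x) \<le> y}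
          = {x \<in> space (PP n). emeasure lborel (Pair x -` ?Q) = 0}"
      proof (intro Collect_cong conj_cong refl)
        fix x assume x: "x \<in> space (PP n)"
        have m: "F x \<in> borel_measurable lebesgue" using F1[OF x] by (rule measurable_completion)
        have "ess_sup lebesgue (F x) \<le> y \<longleftrightarrow> (AE t in lborel. F x t \<le> y)"
          using ess_sup_le_iff[OF m] AE_completion_iff by simp
        also have "\<dots> \<longleftrightarrow> emeasure lborel {t \<in> space lborel. \<not> F x t \<le> y} = 0"
          by (rule AE_iff_measurable) (use F1[OF x] in auto)
        also have "{t \<in> space lborel. \<not> F x t \<le> y} = Pair x -` ?Q"
          using x by (auto simp: space_pair_measure not_le)
        finally show "ess_sup lebesgue (F x) \<le> y \<longleftrightarrow> emeasure lborel (Pair x -` ?Q) = 0" .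
      qed
      also have "\<dots> \<in> sets (PP n)"
        using lborel.measurable_emeasure_Pair[OF Q] by measurable
      finally show "{x \<in> space (PP n). ess_sup lebesgue (F x) \<le> y} \<in> sets (PP n)" .
    qed
    then show ?thesis using True by (simp add: F_def)
  qed
qed

definition mrg :: "nat \<Rightarrow> (nat \<Rightarrow> real) \<Rightarrow> (nat \<Rightarrow> real) \<Rightarrow> (nat \<Rightarrow> real)" where
  "mrg k z x = (\<lambda>i. if i < k then z i else x i)"

lemma mrg_meas:
  assumes "k \<le> n" "x \<in> space (PP n)"
  shows "(\<lambda>z. mrg k z x) \<in> measurable (PP k) (PP n)"
proof (rule measurable_PiM_single')
  fix i assume "i \<in> {..<n}"
  show "(\<lambda>z. mrg k z x i) \<in> measurable (PP k) lborel"
    unfolding mrg_def by (cases "i < k") auto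
next
  show "(\<lambda>z. mrg k z x) \<in> space (PP k) \<rightarrow> (\<Pi>\<^sub>E i\<in>{..<n}. space lborel)"
    using assms by (auto simp: space_PP mrg_def PiE_iff extensional_def)
qed

lemma mrg_0[simp]: "mrg 0 z x = x" by (simp add: mrg_def)

lemma mrg_step: "mrg k z (x(k := t)) = mrg (Suc k) (z(k := t)) x"
  by (auto simp: mrg_def fun_eq_iff)

lemma mrg_top: "z \<in> space (PP n) \<Longrightarrow> mrg n z (origin n) = z"
  by (auto simp: mrg_def fun_eq_iff origin_def space_PP PiE_iff extensional_def)

lemma origin_space: "origin n \<in> space (PP n)"
  by (auto simp: space_PP origin_def PiE_iff extensional_def)

lemma phi_one: "phi M 1 G = (\<integral>\<^sup>+ t. G t \<partial>M)"
  by (simp add: phi_def)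

interpretation PPsf: product_sigma_finite "\<lambda>_::nat. lborel :: real measure"
  by (simp add: product_sigma_finite_def sigma_finite_lborel)

lemma L_tonelli:
  assumes g[measurable]: "g \<in> borel_measurable (PP n)" and "k \<le> n" "x \<in> space (PP n)"
  shows "mixL_aux k (\<lambda>_. 1) g x = (\<integral>\<^sup>+ z. g (mrg k z x) \<partial>PP k)"
  using assms(2-)
proof (induction k arbitrary: x)
  case 0
  then show ?case by (simp add: PiM_empty)
next
  case (Suc k)
  have kn: "k < n" using Suc by auto
  have eq: "mixL_aux k (\<lambda>_. 1) g (x(k := t)) = (\<integral>\<^sup>+ z. g (mrg (Suc k) (z(k := t)) x) \<partial>PP k)" for t
  proof -
    have st: "x(k := t) \<in> space (PP n)" by (rule upd_in_space[OF Suc.prems(2) kn])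
    have "mixL_aux k (\<lambda>_. 1) g (x(k := t)) = (\<integral>\<^sup>+ z. g (mrg k z (x(k := t))) \<partial>PP k)"
      by (rule Suc.IH[OF _ st]) (use Suc.prems in simp)
    then show ?thesis by (simp only: mrg_step)
  qed
  have "mixL_aux (Suc k) (\<lambda>_. 1) g x = (\<integral>\<^sup>+ t. mixL_aux k (\<lambda>_. 1) g (x(k := t)) \<partial>lborel)"
    by (simp add: mixL_aux_Suc_phi phi_one nn_integral_completion)
  also have "\<dots> = (\<integral>\<^sup>+ t. (\<integral>\<^sup>+ z. g (mrg (Suc k) (z(k := t)) x) \<partial>PP k) \<partial>lborel)"
    by (simp only: eq)
  also have "\<dots> = (\<integral>\<^sup>+ w. g (mrg (Suc k) w x) \<partial>PiM (insert k {..<k}) (\<lambda>_. lborel))"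
  proof (rule PPsf.product_nn_integral_insert_rev[symmetric])
    have "(\<lambda>w. g (mrg (Suc k) w x)) \<in> borel_measurable (PP (Suc k))"
      using measurable_comp[OF mrg_meas[OF Suc.prems] g] by (simp add: o_def)
    then show "(\<lambda>w. g (mrg (Suc k) w x)) \<in> borel_measurable (PiM (insert k {..<k}) (\<lambda>_. lborel))"
      by (simp add: lessThan_Suc)
  qed auto
  finally show ?case by (simp add: lessThan_Suc)
qed

lemma L_null_aux:
  assumes Z: "Z \<in> sets (PP n)" and "\<forall>i<k. 1 \<le> p i" "k \<le> n" "x \<in> space (PP n)"
  shows "mixL_aux k p (\<lambda>y. top * indicator Z y) x = mixL_aux k (\<lambda>_. 1) (\<lambda>y. top * indicator Z y) x
    \<and> mixL_aux k (\<lambda>_. 1) (\<lambda>y. top * indicator Z y) x \<in> {0, top}"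
  using assms(2-)
proof (induction k arbitrary: x)
  case 0 then show ?case by (simp add: indicator_def)
next
  case (Suc k)
  have kn: "k < n" using Suc by auto
  let ?g = "\<lambda>y. top * indicator Z y :: ennreal"
  define F where "F = (\<lambda>t. mixL_aux k (\<lambda>_. 1) ?g (x(k := t)))"
  have gm: "?g \<in> borel_measurable (PP n)" using Z by measurable
  have Fm: "F \<in> borel_measurable lborel"
    unfolding F_def
    using measurable_comp[OF meas_upd1[OF kn Suc.prems(3)] L_meas[OF gm _ Suc.prems(2)[THEN Suc_leD]]]
    by (simp add: o_def)
  have pre: "\<forall>i<k. 1 \<le> p i" "k \<le> n" using Suc.prems by auto
  have IH: "mixL_aux k p ?g (x(k := t)) = F t" "F t \<in> {0, top}" for t
  proof -
    have st: "x(k := t) \<in> space (PP n)" by (rule upd_in_space[OF Suc.prems(3) kn])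
    note * = Suc.IH[OF pre st]
    show "mixL_aux k p ?g (x(k := t)) = F t" unfolding F_def using * by (rule conjunct1)
    show "F t \<in> {0, top}" unfolding F_def using * by (rule conjunct2)
  qed
  define A where "A = {t. F t = top}"
  have A: "A \<in> sets lborel" unfolding A_def using Fm by measurable
  have FA: "F = (\<lambda>t. top * indicator A t)"
    using IH(2) by (auto simp: fun_eq_iff A_def indicator_def)
  have A': "A \<in> sets lebesgue" using A by auto
  have e1: "mixL_aux (Suc k) p ?g x = phi lebesgue (p k) (\<lambda>t. top * indicator A t)"
    unfolding mixL_aux_Suc_phi IH(1) FA ..
  have e2: "mixL_aux (Suc k) (\<lambda>_. 1) ?g x = phi lebesgue 1 (\<lambda>t. top * indicator A t)"
    unfolding mixL_aux_Suc_phi FA[symmetric] F_def ..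
  show ?case unfolding e1 e2
    using phi_top_indicator[OF A', of "p k"] phi_top_indicator[OF A', of 1] Suc.prems by auto
qed

lemma L_null:
  assumes Z: "Z \<in> sets (PP n)" "emeasure (PP n) Z = 0" and "\<forall>i<n. 1 \<le> p i"
  shows "mixL_aux n p (\<lambda>y. top * indicator Z y) (origin n) = 0"
proof -
  have gm: "(\<lambda>y. top * indicator Z y :: ennreal) \<in> borel_measurable (PP n)" using Z by measurable
  have "mixL_aux n p (\<lambda>y. top * indicator Z y) (origin n)
      = (\<integral>\<^sup>+ z. top * indicator Z (mrg n z (origin n)) \<partial>PP n)"
    using L_null_aux[OF Z(1) assms(3) le_refl origin_space] L_tonelli[OF gm le_refl origin_space]
    by simp
  also have "\<dots> = (\<integral>\<^sup>+ z. top * indicator Z z \<partial>PP n)"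
    by (intro nn_integral_cong) (simp add: mrg_top)
  also have "\<dots> = 0" using Z by (simp add: nn_integral_cmult_indicator)
  finally show ?thesis .
qed

lemma phi_zero: "1 \<le> q \<Longrightarrow> phi M q (\<lambda>_. 0) = 0"
proof (cases "q = top")
  case True
  have "ess_sup M (\<lambda>_. 0) \<le> 0" by (rule ess_sup_le) simp
  then show ?thesis using True by (simp add: phi_def)
next
  case False
  assume "1 \<le> q"
  then have "enn2real q \<ge> 1" using q_real_ge1 False by blast
  then show ?thesis using False by (simp add: phi_def)
qed

lemma L_zero: "\<forall>i<k. 1 \<le> p i \<Longrightarrow> mixL_aux k p (\<lambda>_. 0) x = 0"
proof (induction k arbitrary: x)
  case (Suc k)
  then have "\<forall>i<k. 1 \<le> p i" by auto
  then have z: "mixL_aux k p (\<lambda>_. 0) y = 0" for y using Suc.IH by blast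
  have "mixL_aux (Suc k) p (\<lambda>_. 0) x = phi lebesgue (p k) (\<lambda>t::real. 0)"
    by (simp only: mixL_aux_Suc_phi z)
  then show ?case using Suc.prems by (simp add: phi_zero)
qed simp

lemma L_comp_meas:
  assumes "h \<in> borel_measurable (PP n)" "k < n" "x \<in> space (PP n)"
  shows "(\<lambda>t. h (x(k := t))) \<in> borel_measurable lebesgue"
  using measurable_comp[OF meas_upd1[OF assms(2,3)] assms(1)]
  by (intro measurable_completion) (simp add: o_def)

lemma L_add:
  assumes g: "g \<in> borel_measurable (PP n)" and h: "h \<in> borel_measurable (PP n)"
    and "\<forall>i<k. 1 \<le> p i" "k \<le> n" "x \<in> space (PP n)"
  shows "mixL_aux k p (\<lambda>y. g y + h y) x \<le> 4 ^ k * (mixL_aux k p g x + mixL_aux k p h x)"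
  using assms(3-)
proof (induction k arbitrary: x)
  case 0 then show ?case by simp
next
  case (Suc k)
  have kn: "k < n" using Suc by auto
  have pk: "1 \<le> p k" using Suc by auto
  define G where "G = (\<lambda>t. mixL_aux k p g (x(k := t)))"
  define H where "H = (\<lambda>t. mixL_aux k p h (x(k := t)))"
  have Gm[measurable]: "G \<in> borel_measurable lebesgue"
    unfolding G_def using L_comp_meas[OF L_meas[OF g] kn Suc.prems(3)] Suc.prems by auto
  have Hm[measurable]: "H \<in> borel_measurable lebesgue"
    unfolding H_def using L_comp_meas[OF L_meas[OF h] kn Suc.prems(3)] Suc.prems by auto
  have "mixL_aux (Suc k) p (\<lambda>y. g y + h y) x
      \<le> phi lebesgue (p k) (\<lambda>t. 4 ^ k * (G t + H t))"
    unfolding mixL_aux_Suc_phi G_def H_def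
    using Suc by (intro phi_mono pk) (auto intro!: Suc.IH upd_in_space)
  also have "\<dots> = 4 ^ k * phi lebesgue (p k) (\<lambda>t. G t + H t)"
    by (rule phi_cmult) (auto simp: pk power_less_top_ennreal)
  also have "\<dots> \<le> 4 ^ k * (4 * (phi lebesgue (p k) G + phi lebesgue (p k) H))"
    by (intro mult_left_mono phi_add Gm Hm pk) simp
  also have "\<dots> = 4 ^ Suc k * (mixL_aux (Suc k) p g x + mixL_aux (Suc k) p h x)"
    unfolding mixL_aux_Suc_phi G_def H_def by (simp only: power_Suc) (simp add: algebra_simps)
  finally show ?case .
qed

lemma L_sum:
  assumes "finite S" "\<And>m. m \<in> S \<Longrightarrow> g m \<in> borel_measurable (PP n)"
    and p: "\<forall>i<n. 1 \<le> p i" and x: "x \<in> space (PP n)"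
  shows "mixL_aux n p (\<lambda>y. \<Sum>m\<in>S. g m y) x \<le> (4 ^ n) ^ card S * (\<Sum>m\<in>S. mixL_aux n p (g m) x)"
  using assms(1,2)
proof (induction S rule: finite_induct)
  case empty
  then show ?case using L_zero[OF p] by simp
next
  case (insert m S)
  let ?C = "(4 ^ n :: ennreal)"
  have sm: "(\<lambda>y. \<Sum>m\<in>S. g m y) \<in> borel_measurable (PP n)" using insert by measurable
  have "mixL_aux n p (\<lambda>y. \<Sum>m\<in>insert m S. g m y) x = mixL_aux n p (\<lambda>y. g m y + (\<Sum>m\<in>S. g m y)) x"
    using insert by simp
  also have "\<dots> \<le> ?C * (mixL_aux n p (g m) x + mixL_aux n p (\<lambda>y. \<Sum>m\<in>S. g m y) x)"
    by (rule L_add[OF _ sm p le_refl x]) (use insert in auto)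
  also have "\<dots> \<le> ?C * (mixL_aux n p (g m) x + ?C ^ card S * (\<Sum>m\<in>S. mixL_aux n p (g m) x))"
    using insert by (intro mult_left_mono add_left_mono) auto
  also have "\<dots> \<le> ?C * (?C ^ card S * mixL_aux n p (g m) x + ?C ^ card S * (\<Sum>m\<in>S. mixL_aux n p (g m) x))"
  proof -
    have "1 \<le> ?C ^ card S" by (simp add: one_le_power)
    then have "mixL_aux n p (g m) x \<le> ?C ^ card S * mixL_aux n p (g m) x"
      using mult_right_mono[of 1 "?C ^ card S" "mixL_aux n p (g m) x"] by simp
    then show ?thesis by (intro mult_left_mono add_right_mono) auto
  qed
  also have "\<dots> = ?C ^ card (insert m S) * (\<Sum>m\<in>insert m S. mixL_aux n p (g m) x)"
    using insert by (simp add: distrib_left mult.assoc)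
  finally show ?case .
qed

lemma cs_meas[measurable]: "(f::int \<Rightarrow> ennreal) \<in> borel_measurable (count_space UNIV)"
  by simp

lemma D_mono:
  assumes "\<And>z. a z \<le> b z" "\<forall>i<k. 1 \<le> s i"
  shows "mixl_aux k s a z \<le> mixl_aux k s b z"
  using assms(2)
proof (induction k arbitrary: z)
  case 0 then show ?case using assms(1) by simp
next
  case (Suc k)
  show ?case unfolding mixl_aux_Suc_phi
    using Suc by (intro phi_mono) (auto intro!: Suc.IH)
qed

lemma D_dep:
  assumes "\<forall>i\<ge>k. z i = z' i"
  shows "mixl_aux k s a z = mixl_aux k s a z'"
  using assms
proof (induction k arbitrary: z z')
  case 0
  then have "z = z'" by auto
  then show ?case by simp
next
  case (Suc k)
  have "mixl_aux k s a (z(k := t)) = mixl_aux k s a (z'(k := t))" for t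
    using Suc.prems by (intro Suc.IH) auto
  then show ?case unfolding mixl_aux_Suc_phi by simp
qed

lemma D_cmult:
  assumes "c < top" "\<forall>i<k. 1 \<le> s i"
  shows "mixl_aux k s (\<lambda>z. c * a z) z = c * mixl_aux k s a z"
  using assms(2)
proof (induction k arbitrary: z)
  case 0 then show ?case by simp
next
  case (Suc k)
  then have "\<forall>i<k. 1 \<le> s i" by auto
  then have e: "mixl_aux k s (\<lambda>z. c * a z) y = c * mixl_aux k s a y" for y using Suc.IH by blast
  show ?case unfolding mixl_aux_Suc_phi e
    by (rule phi_cmult) (use assms Suc.prems in auto)
qed

lemma D_zero: "\<forall>i<k. 1 \<le> s i \<Longrightarrow> mixl_aux k s (\<lambda>_. 0) z = 0"
proof (induction k arbitrary: z)
  case (Suc k)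
  then have "\<forall>i<k. 1 \<le> s i" by auto
  then have z: "mixl_aux k s (\<lambda>_. 0) y = 0" for y using Suc.IH by blast
  have "mixl_aux (Suc k) s (\<lambda>_. 0) z = phi (count_space UNIV) (s k) (\<lambda>t::int. 0)"
    by (simp only: mixl_aux_Suc_phi z)
  then show ?case using Suc.prems by (simp add: phi_zero)
qed simp

lemma D_add:
  assumes "\<forall>i<k. 1 \<le> s i"
  shows "mixl_aux k s (\<lambda>z. a z + b z) z \<le> 4 ^ k * (mixl_aux k s a z + mixl_aux k s b z)"
  using assms
proof (induction k arbitrary: z)
  case 0 then show ?case by simp
next
  case (Suc k)
  have sk: "1 \<le> s k" using Suc by auto
  define G where "G = (\<lambda>t. mixl_aux k s a (z(k := t)))"
  define H where "H = (\<lambda>t. mixl_aux k s b (z(k := t)))"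
  have "mixl_aux (Suc k) s (\<lambda>z. a z + b z) z
      \<le> phi (count_space UNIV) (s k) (\<lambda>t. 4 ^ k * (G t + H t))"
    unfolding mixl_aux_Suc_phi G_def H_def
    using Suc by (intro phi_mono sk) (auto intro!: Suc.IH)
  also have "\<dots> = 4 ^ k * phi (count_space UNIV) (s k) (\<lambda>t. G t + H t)"
    by (rule phi_cmult) (auto simp: sk power_less_top_ennreal)
  also have "\<dots> \<le> 4 ^ k * (4 * (phi (count_space UNIV) (s k) G + phi (count_space UNIV) (s k) H))"
    by (intro mult_left_mono phi_add sk) auto
  also have "\<dots> = 4 ^ Suc k * (mixl_aux (Suc k) s a z + mixl_aux (Suc k) s b z)"
    unfolding mixl_aux_Suc_phi G_def H_def by (simp only: power_Suc) (simp add: algebra_simps)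
  finally show ?case .
qed

lemma D_sum:
  assumes "finite S" and s: "\<forall>i<k. 1 \<le> s i"
  shows "mixl_aux k s (\<lambda>z. \<Sum>m\<in>S. a m z) z \<le> (4 ^ k) ^ card S * (\<Sum>m\<in>S. mixl_aux k s (a m) z)"
  using assms(1)
proof (induction S rule: finite_induct)
  case empty
  then show ?case using D_zero[OF s] by simp
next
  case (insert m S)
  let ?C = "(4 ^ k :: ennreal)"
  have "mixl_aux k s (\<lambda>z. \<Sum>m\<in>insert m S. a m z) z = mixl_aux k s (\<lambda>z. a m z + (\<Sum>m\<in>S. a m z)) z"
    using insert by simp
  also have "\<dots> \<le> ?C * (mixl_aux k s (a m) z + mixl_aux k s (\<lambda>z. \<Sum>m\<in>S. a m z) z)"
    by (rule D_add[OF s])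
  also have "\<dots> \<le> ?C * (mixl_aux k s (a m) z + ?C ^ card S * (\<Sum>m\<in>S. mixl_aux k s (a m) z))"
    using insert by (intro mult_left_mono add_left_mono) auto
  also have "\<dots> \<le> ?C * (?C ^ card S * mixl_aux k s (a m) z + ?C ^ card S * (\<Sum>m\<in>S. mixl_aux k s (a m) z))"
  proof -
    have "1 \<le> ?C ^ card S" by (simp add: one_le_power)
    then have "mixl_aux k s (a m) z \<le> ?C ^ card S * mixl_aux k s (a m) z"
      using mult_right_mono[of 1 "?C ^ card S" "mixl_aux k s (a m) z"] by simp
    then show ?thesis by (intro mult_left_mono add_right_mono) auto
  qed
  also have "\<dots> = ?C ^ card (insert m S) * (\<Sum>m\<in>insert m S. mixl_aux k s (a m) z)"
    using insert by (simp add: distrib_left mult.assoc)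
  finally show ?case .
qed

lemma phi_reindex:
  assumes "inj (\<psi> :: int \<Rightarrow> int)" "1 \<le> q"
  shows "phi (count_space UNIV) q (\<lambda>t. H (\<psi> t)) \<le> phi (count_space UNIV) q H"
proof (cases "q = top")
  case True
  then show ?thesis by (simp add: phi_def ess_sup_count_space) (auto intro!: SUP_least SUP_upper)
next
  case False
  define Q where "Q = enn2real q"
  then have Q: "Q \<ge> 1" using q_real_ge1 assms False by blast
  have bij: "bij_betw \<psi> UNIV (range \<psi>)" using assms(1) by (simp add: bij_betw_def)
  have "(\<integral>\<^sup>+ t. epow (H (\<psi> t)) Q \<partial>count_space UNIV) = (\<integral>\<^sup>+ u. epow (H u) Q \<partial>count_space (range \<psi>))"
    using nn_integral_bij_count_space[OF bij, of "\<lambda>u. epow (H u) Q"] by simp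
  also have "\<dots> = (\<integral>\<^sup>+ u. epow (H u) Q * indicator (range \<psi>) u \<partial>count_space UNIV)"
    by (rule nn_integral_count_space_indicator) simp
  also have "\<dots> \<le> (\<integral>\<^sup>+ u. epow (H u) Q \<partial>count_space UNIV)"
    by (intro nn_integral_mono) (auto simp: indicator_def)
  finally show ?thesis using False Q by (auto simp: phi_def Q_def intro!: epow_mono)
qed

definition reidx :: "(nat \<Rightarrow> int \<Rightarrow> int) \<Rightarrow> (nat \<Rightarrow> int) \<Rightarrow> (nat \<Rightarrow> int)" where
  "reidx \<psi> z = (\<lambda>i. \<psi> i (z i))"

lemma reidx_upd: "reidx \<psi> (z(k := t)) = (reidx \<psi> z)(k := \<psi> k t)"
  by (auto simp: reidx_def fun_eq_iff)

lemma D_reindex: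
  assumes "\<And>i. inj (\<psi> i)" "\<forall>i<k. 1 \<le> s i"
  shows "mixl_aux k s (\<lambda>z. a (reidx \<psi> z)) z \<le> mixl_aux k s a (reidx \<psi> z)"
  using assms(2)
proof (induction k arbitrary: z)
  case 0 then show ?case by simp
next
  case (Suc k)
  have sk: "1 \<le> s k" using Suc by auto
  have pre: "\<forall>i<k. 1 \<le> s i" using Suc by auto
  have "mixl_aux (Suc k) s (\<lambda>z. a (reidx \<psi> z)) z
      \<le> phi (count_space UNIV) (s k) (\<lambda>t. mixl_aux k s a ((reidx \<psi> z)(k := \<psi> k t)))"
    unfolding mixl_aux_Suc_phi
    by (intro phi_mono sk) (simp add: Suc.IH[OF pre, simplified reidx_upd] reidx_upd[symmetric])
  also have "\<dots> \<le> mixl_aux (Suc k) s a (reidx \<psi> z)"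
    unfolding mixl_aux_Suc_phi
    by (rule phi_reindex[OF assms(1) sk, of "\<lambda>u. mixl_aux k s a ((reidx \<psi> z)(k := u))"])
  finally show ?case .
qed

lemma D_reindex_top:
  assumes "\<And>i. inj (\<psi> i)" "\<forall>i<n. 1 \<le> s i" "\<And>i. i \<ge> n \<Longrightarrow> \<psi> i = id"
  shows "mixl n s (\<lambda>z. a (reidx \<psi> z)) \<le> mixl n s a"
proof -
  have "mixl n s (\<lambda>z. a (reidx \<psi> z)) \<le> mixl_aux n s a (reidx \<psi> (origin n))"
    unfolding mixl_def by (rule D_reindex[OF assms(1,2)])
  also have "\<dots> = mixl n s a"
    unfolding mixl_def by (rule D_dep) (auto simp: reidx_def assms(3))
  finally show ?thesis .
qed

interpretation CSL: pair_sigma_finite "count_space (UNIV::int set)" "lborel::real measure"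
  by (simp add: pair_sigma_finite_def sigma_finite_measure_count_space sigma_finite_lborel)

lemma floor_integral:
  fixes F :: "int \<Rightarrow> ennreal" and r :: real
  assumes r: "r > 0"
  shows "(\<integral>\<^sup>+ t. F \<lfloor>t / r\<rfloor> \<partial>lborel) = ennreal r * (\<integral>\<^sup>+ m. F m \<partial>count_space UNIV)"
proof -
  define I where "I m = {r * of_int m ..< r * (of_int m + 1)}" for m :: int
  have memI: "t \<in> I m \<longleftrightarrow> m = \<lfloor>t / r\<rfloor>" for t m
  proof -
    have "t \<in> I m \<longleftrightarrow> of_int m \<le> t / r \<and> t / r < of_int m + 1"
      using r by (auto simp: I_def field_simps)
    also have "\<dots> \<longleftrightarrow> m = \<lfloor>t / r\<rfloor>" using floor_eq_iff[of "t / r" m] by auto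
    finally show ?thesis .
  qed
  have pt: "F \<lfloor>t / r\<rfloor> = (\<integral>\<^sup>+ m. F m * indicator (I m) t \<partial>count_space UNIV)" for t
  proof -
    have "(\<lambda>m. F m * indicator (I m) t) = (\<lambda>m. F \<lfloor>t / r\<rfloor> * indicator {\<lfloor>t / r\<rfloor>} m)"
      by (auto simp: fun_eq_iff indicator_def memI)
    then show ?thesis by (simp add: nn_integral_cmult_indicator)
  qed
  have meas: "(\<lambda>(m, t). F m * indicator (I m) t) \<in> borel_measurable (count_space UNIV \<Otimes>\<^sub>M lborel)"
  proof -
    have "(\<lambda>x. (\<lambda>m x. F m * indicator (I m) (snd x)) (fst x) x) \<in> borel_measurable (count_space UNIV \<Otimes>\<^sub>M lborel)"
      by (rule measurable_compose_countable'[where I=UNIV]) (auto simp: I_def)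
    then show ?thesis by (simp add: case_prod_beta')
  qed
  have "(\<integral>\<^sup>+ t. F \<lfloor>t / r\<rfloor> \<partial>lborel) = (\<integral>\<^sup>+ t. (\<integral>\<^sup>+ m. F m * indicator (I m) t \<partial>count_space UNIV) \<partial>lborel)"
    by (simp add: pt)
  also have "\<dots> = (\<integral>\<^sup>+ m. (\<integral>\<^sup>+ t. F m * indicator (I m) t \<partial>lborel) \<partial>count_space UNIV)"
    by (rule CSL.Fubini'[OF meas])
  also have "\<dots> = (\<integral>\<^sup>+ m. F m * ennreal r \<partial>count_space UNIV)"
  proof (intro nn_integral_cong)
    fix m :: int
    have "emeasure lborel (I m) = ennreal r" using r by (simp add: I_def field_simps)
    then show "(\<integral>\<^sup>+ t. F m * indicator (I m) t \<partial>lborel) = F m * ennreal r"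
      by (simp add: nn_integral_cmult_indicator I_def)
  qed
  also have "\<dots> = ennreal r * (\<integral>\<^sup>+ m. F m \<partial>count_space UNIV)"
    by (subst mult.commute) (simp add: nn_integral_cmult)
  finally show ?thesis .
qed

lemma floor_ess_sup:
  fixes F :: "int \<Rightarrow> ennreal" and r :: real
  assumes r: "r > 0"
  shows "ess_sup lebesgue (\<lambda>t. F \<lfloor>t / r\<rfloor>) = (SUP m. F m)"
proof (rule antisym)
  show "ess_sup lebesgue (\<lambda>t. F \<lfloor>t / r\<rfloor>) \<le> (SUP m. F m)"
    by (rule ess_sup_le) (auto intro: SUP_upper)
next
  have m: "(\<lambda>t. F \<lfloor>t / r\<rfloor>) \<in> borel_measurable lebesgue"
    by (rule measurable_completion) measurable
  show "(SUP m. F m) \<le> ess_sup lebesgue (\<lambda>t. F \<lfloor>t / r\<rfloor>)"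
  proof (rule SUP_least, rule ccontr)
    fix m :: int
    let ?E = "ess_sup lebesgue (\<lambda>t. F \<lfloor>t / r\<rfloor>)"
    assume "\<not> F m \<le> ?E"
    then have lt: "?E < F m" by simp
    define I where "I = {r * of_int m ..< r * (of_int m + 1)}"
    have memI: "t \<in> I \<Longrightarrow> \<lfloor>t / r\<rfloor> = m" for t
      using r by (auto simp: I_def floor_eq_iff field_simps)
    have "AE t in lebesgue. F \<lfloor>t / r\<rfloor> \<le> ?E" by (rule ess_sup_AE[OF m])
    then have "AE t in lebesgue. t \<notin> I"
      by eventually_elim (use lt memI in force)
    moreover have IS: "I \<in> sets lebesgue" by (simp add: I_def)
    moreover have eqA: "{x\<in>space lebesgue. \<not> (x \<notin> I)} = I"
      by auto
    ultimately have "emeasure lebesgue I = 0"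
      using AE_iff_measurable[OF IS eqA] by simp
    moreover have "emeasure lebesgue I = ennreal r"
      using r by (simp add: I_def emeasure_completion field_simps)
    ultimately show False using r by simp
  qed
qed

lemma phi_floor:
  fixes F :: "int \<Rightarrow> ennreal" and r :: real
  assumes r: "r > 0" and q: "1 \<le> q"
  shows "phi lebesgue q (\<lambda>t. F \<lfloor>t / r\<rfloor>) = ennreal (r powr einv q) * phi (count_space UNIV) q F"
proof (cases "q = top")
  case True
  then show ?thesis using r by (simp add: phi_def einv_def floor_ess_sup ess_sup_count_space)
next
  case False
  define Q where "Q = enn2real q"
  then have Q: "Q \<ge> 1" using q_real_ge1 q False by blast
  have "phi lebesgue q (\<lambda>t. F \<lfloor>t / r\<rfloor>)
      = epow (ennreal r * (\<integral>\<^sup>+ m. epow (F m) Q \<partial>count_space UNIV)) (1 / Q)"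
    using False floor_integral[OF r, of "\<lambda>m. epow (F m) Q"]
    by (simp add: phi_def Q_def nn_integral_completion)
  also have "\<dots> = ennreal (r powr (1 / Q)) * epow (\<integral>\<^sup>+ m. epow (F m) Q \<partial>count_space UNIV) (1 / Q)"
    using Q r by (simp add: epow_mult epow_ennreal)
  finally show ?thesis using False by (simp add: phi_def Q_def einv_def)
qed

definition kap :: "nat \<Rightarrow> real \<Rightarrow> (nat \<Rightarrow> real) \<Rightarrow> (nat \<Rightarrow> int)" where
  "kap n r y = (\<lambda>i. if i < n then \<lfloor>y i / r\<rfloor> else undefined)"

lemma kap_upd: "k < n \<Longrightarrow> kap n r (x(k := t)) = (kap n r x)(k := \<lfloor>t / r\<rfloor>)"
  by (auto simp: kap_def fun_eq_iff)

lemma kap_origin: "kap n r (origin n) = origin n"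
  by (auto simp: kap_def origin_def fun_eq_iff)

lemma L_step:
  assumes r: "r > 0" and s: "\<forall>i<k. 1 \<le> s i" and k: "k \<le> n"
  shows "mixL_aux k s (\<lambda>y. h (kap n r y)) x
    = ennreal (r powr (\<Sum>i<k. einv (s i))) * mixl_aux k s h (kap n r x)"
  using s k
proof (induction k arbitrary: x)
  case 0 then show ?case using r by simp
next
  case (Suc k)
  have kn: "k < n" using Suc by auto
  have sk: "1 \<le> s k" using Suc by auto
  have pre: "\<forall>i<k. 1 \<le> s i" "k \<le> n" using Suc by auto
  define c where "c = ennreal (r powr (\<Sum>i<k. einv (s i)))"
  define F where "F = (\<lambda>m. mixl_aux k s h ((kap n r x)(k := m)))"
  have IH': "mixL_aux k s (\<lambda>y. h (kap n r y)) y = c * mixl_aux k s h (kap n r y)" for y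
    using Suc.IH[OF pre] unfolding c_def by blast
  have e: "mixL_aux k s (\<lambda>y. h (kap n r y)) (x(k := t)) = c * F \<lfloor>t / r\<rfloor>" for t
    unfolding IH' F_def kap_upd[OF kn] ..
  have "mixL_aux (Suc k) s (\<lambda>y. h (kap n r y)) x = phi lebesgue (s k) (\<lambda>t. c * F \<lfloor>t / r\<rfloor>)"
    unfolding mixL_aux_Suc_phi e ..
  also have "\<dots> = ennreal (r powr einv (s k)) * phi (count_space UNIV) (s k) (\<lambda>m. c * F m)"
    by (rule phi_floor[OF r sk])
  also have "\<dots> = ennreal (r powr einv (s k)) * (c * phi (count_space UNIV) (s k) F)"
    by (subst phi_cmult) (auto simp: c_def sk)
  also have "\<dots> = ennreal (r powr (\<Sum>i<Suc k. einv (s i))) * mixl_aux (Suc k) s h (kap n r x)"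
  proof -
    have "ennreal (r powr (\<Sum>i<Suc k. einv (s i))) = ennreal (r powr einv (s k)) * c"
      unfolding c_def using r by (simp add: powr_add ennreal_mult[symmetric] mult.commute)
    then show ?thesis unfolding mixl_aux_Suc_phi F_def by (simp only: mult.assoc)
  qed
  finally show ?case .
qed

lemma L_step_top:
  assumes r: "r > 0" and s: "\<forall>i<n. 1 \<le> s i"
  shows "mixL n s (\<lambda>y. h (kap n r y)) = ennreal (r powr (\<Sum>i<n. einv (s i))) * mixl n s h"
  unfolding mixL_def mixl_def using L_step[OF r s le_refl] kap_origin by simp

definition nf :: "nat \<Rightarrow> (nat \<Rightarrow> ennreal) \<Rightarrow> ((nat \<Rightarrow> real) \<Rightarrow> real) \<Rightarrow> (nat \<Rightarrow> real) set \<Rightarrow> ennreal" where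
  "nf n p f A = mixL n p (\<lambda>x. ennreal \<bar>f x\<bar> * indicator A x)"

lemma normL_ind: "normL n p (\<lambda>x. f x * indicator A x) = nf n p f A"
proof -
  have "(\<lambda>x. ennreal \<bar>f x * indicator A x\<bar>) = (\<lambda>x. ennreal \<bar>f x\<bar> * indicator A x)"
    by (auto simp: fun_eq_iff indicator_def)
  then show ?thesis by (simp add: normL_def nf_def)
qed

lemma NF_mono:
  assumes "A \<inter> space (PP n) \<subseteq> B" "\<forall>i<n. 1 \<le> p i"
  shows "nf n p f A \<le> nf n p f B"
  unfolding nf_def mixL_def
  by (rule L_mono[OF _ assms(2) le_refl origin_space]) (use assms(1) in \<open>auto simp: indicator_def\<close>)

lemma COVER:
  assumes f: "f \<in> borel_measurable (lebn n)" and p: "\<forall>i<n. 1 \<le> p i"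
    and S: "finite S" and B: "\<And>m. m \<in> S \<Longrightarrow> B m \<in> sets (PP n)"
    and cov: "A \<inter> space (PP n) \<subseteq> (\<Union>m\<in>S. B m)"
  shows "nf n p f A \<le> (4 ^ n * (4 ^ n) ^ card S) * (\<Sum>m\<in>S. nf n p f (B m))"
proof -
  let ?g = "\<lambda>x. ennreal \<bar>f x\<bar>"
  have "?g \<in> borel_measurable (completion (PP n))"
    using f unfolding lebn_def by measurable
  from completion_ex_borel_measurable[OF this]
  obtain g' where g'[measurable]: "g' \<in> borel_measurable (PP n)" and ae: "AE x in PP n. ?g x = g' x"
    by blast
  from ae obtain Z where Z: "{x \<in> space (PP n). \<not> ?g x = g' x} \<subseteq> Z"
    and Z0: "emeasure (PP n) Z = 0" and Zs[measurable]: "Z \<in> sets (PP n)"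
    by (rule AE_E)
  define h0 where "h0 x = g' x * indicator (space (PP n) - Z) x" for x
  have h0[measurable]: "h0 \<in> borel_measurable (PP n)" unfolding h0_def by measurable
  have h0g: "h0 x \<le> ?g x" if "x \<in> space (PP n)" for x
    using Z that by (cases "x \<in> Z") (auto simp: h0_def)
  have gh0: "?g x \<le> h0 x + top * indicator Z x" if "x \<in> space (PP n)" for x
    using Z that by (cases "x \<in> Z") (auto simp: h0_def)
  let ?N = "\<lambda>u. mixL_aux n p u (origin n)"
  have Bm[measurable]: "(\<lambda>x. h0 x * indicator (B m) x) \<in> borel_measurable (PP n)" if "m \<in> S" for m
    using B[OF that] by measurable
  have sm: "(\<lambda>x. \<Sum>m\<in>S. h0 x * indicator (B m) x) \<in> borel_measurable (PP n)"
    using Bm by (intro borel_measurable_sum) auto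
  have pt: "?g x * indicator A x \<le> (\<Sum>m\<in>S. h0 x * indicator (B m) x) + top * indicator Z x"
    if x: "x \<in> space (PP n)" for x
  proof (cases "x \<in> Z")
    case True then show ?thesis by simp
  next
    case False
    then have gx: "?g x = h0 x" using Z x by (auto simp: h0_def)
    show ?thesis
    proof (cases "x \<in> A")
      case False then show ?thesis by simp
    next
      case True
      then obtain m where m: "m \<in> S" "x \<in> B m" using cov x by auto
      have "?g x * indicator A x = h0 x * indicator (B m) x" using gx m True by simp
      also have "\<dots> \<le> (\<Sum>m\<in>S. h0 x * indicator (B m) x)"
        by (rule member_le_sum[OF m(1)]) (auto simp: S)
      finally show ?thesis by (simp add: add_increasing2)
    qed
  qed
  have "nf n p f A \<le> ?N (\<lambda>x. (\<Sum>m\<in>S. h0 x * indicator (B m) x) + top * indicator Z x)"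
    unfolding nf_def mixL_def by (rule L_mono[OF pt p le_refl origin_space])
  also have "\<dots> \<le> 4 ^ n * (?N (\<lambda>x. \<Sum>m\<in>S. h0 x * indicator (B m) x) + ?N (\<lambda>x. top * indicator Z x))"
    by (rule L_add[OF sm _ p le_refl origin_space]) measurable
  also have "?N (\<lambda>x. top * indicator Z x) = 0" by (rule L_null[OF Zs Z0 p])
  also have "?N (\<lambda>x. \<Sum>m\<in>S. h0 x * indicator (B m) x)
      \<le> (4 ^ n) ^ card S * (\<Sum>m\<in>S. ?N (\<lambda>x. h0 x * indicator (B m) x))"
    by (rule L_sum[OF S Bm p origin_space])
  also have "(\<Sum>m\<in>S. ?N (\<lambda>x. h0 x * indicator (B m) x)) \<le> (\<Sum>m\<in>S. nf n p f (B m))"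
    unfolding nf_def mixL_def
    by (intro sum_mono L_mono[OF _ p le_refl origin_space]) (auto intro: mult_right_mono h0g)
  finally show ?thesis
    by (simp add: mult.assoc mult_left_mono)
qed

lemma cube_eq: "cuben n r k = PiE {..<n} (\<lambda>i. {r * of_int (k i) ..< r * (of_int (k i) + 1)})"
proof (intro set_eqI iffI)
  fix x assume "x \<in> cuben n r k"
  then show "x \<in> PiE {..<n} (\<lambda>i. {r * of_int (k i) ..< r * (of_int (k i) + 1)})"
    by (simp add: cuben_def PiE_iff)
next
  fix x assume "x \<in> PiE {..<n} (\<lambda>i. {r * of_int (k i) ..< r * (of_int (k i) + 1)})"
  then show "x \<in> cuben n r k"
    by (simp add: cuben_def PiE_iff)
qed

lemma cube_sets: "cuben n r k \<in> sets (PP n)"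
  unfolding cube_eq by (rule sets_PiM_I_finite) auto

lemma ball_eq: "balln n y r = {x \<in> space (PP n). sqrt (\<Sum>i<n. (x i - y i)^2) < r}"
  by (simp add: balln_def space_PP)

lemma ball_sets: "balln n y r \<in> sets (PP n)"
  unfolding ball_eq by measurable

lemma ball_coord:
  assumes "x \<in> balln n y r" "i < n"
  shows "\<bar>x i - y i\<bar> < r"
proof -
  have "(x i - y i)^2 \<le> (\<Sum>i<n. (x i - y i)^2)"
    using assms(2) by (intro member_le_sum) auto
  then have "sqrt ((x i - y i)^2) \<le> sqrt (\<Sum>i<n. (x i - y i)^2)"
    by (rule real_sqrt_le_mono)
  then show ?thesis using assms(1) by (simp add: balln_def)
qed

lemma floor_in_cell:
  fixes r t :: real assumes r: "r > 0"
  shows "r * of_int \<lfloor>t / r\<rfloor> \<le> t \<and> t < r * (of_int \<lfloor>t / r\<rfloor> + 1)"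
proof
  have a: "of_int \<lfloor>t / r\<rfloor> \<le> t / r" by (rule of_int_floor_le)
  have "r * of_int \<lfloor>t / r\<rfloor> \<le> r * (t / r)" using a r by (intro mult_left_mono) auto
  then show "r * of_int \<lfloor>t / r\<rfloor> \<le> t" using r by simp
  have b: "t / r < of_int \<lfloor>t / r\<rfloor> + 1" using floor_correct[of "t / r"] by simp
  have "r * (t / r) < r * (of_int \<lfloor>t / r\<rfloor> + 1)" using b r by (intro mult_strict_left_mono) auto
  then show "t < r * (of_int \<lfloor>t / r\<rfloor> + 1)" using r by simp
qed

lemma in_cube_floor:
  assumes "r > 0" "x \<in> space (PP n)"
    and "\<And>i. i < n \<Longrightarrow> k i = \<lfloor>x i / r\<rfloor>"
  shows "x \<in> cuben n r k"
proof -
  have "r * of_int \<lfloor>x i / r\<rfloor> \<le> x i \<and> x i < r * (of_int \<lfloor>x i / r\<rfloor> + 1)" for i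
    by (rule floor_in_cell[OF assms(1)])
  then show ?thesis using assms by (auto simp: cuben_def space_PP)
qed

lemma floor_diff_small:
  fixes a b :: real assumes "\<bar>a - b\<bar> < 1"
  shows "\<lfloor>a\<rfloor> - \<lfloor>b\<rfloor> \<in> {-1, 0, 1}"
proof -
  have ab: "a \<le> b + 1" "b \<le> a + 1" using assms by linarith+
  have h1: "\<lfloor>a\<rfloor> \<le> \<lfloor>b + 1\<rfloor>" using ab(1) by (rule floor_mono)
  have h2: "\<lfloor>b\<rfloor> \<le> \<lfloor>a + 1\<rfloor>" using ab(2) by (rule floor_mono)
  have "\<lfloor>a\<rfloor> - \<lfloor>b\<rfloor> \<le> 1" "-1 \<le> \<lfloor>a\<rfloor> - \<lfloor>b\<rfloor>" using h1 h2 by simp_all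
  moreover have "\<And>d::int. d \<le> 1 \<Longrightarrow> -1 \<le> d \<Longrightarrow> d = -1 \<or> d = 0 \<or> d = 1" by presburger
  ultimately show ?thesis by blast
qed

definition JA :: "nat \<Rightarrow> (nat \<Rightarrow> int) set" where
  "JA n = PiE {..<n} (\<lambda>_. {-1, 0, 1})"

definition psiA :: "nat \<Rightarrow> (nat \<Rightarrow> int) \<Rightarrow> nat \<Rightarrow> int \<Rightarrow> int" where
  "psiA n j = (\<lambda>i t. if i < n then t + j i else t)"

lemma JA_finite: "finite (JA n)"
  unfolding JA_def by (rule finite_PiE) auto

lemma psiA_inj: "inj (psiA n j i)"
  by (auto simp: psiA_def inj_def)

lemma GA:
  assumes r: "r > 0"
  shows "balln n y r \<inter> space (PP n) \<subseteq> (\<Union>j\<in>JA n. cuben n r (reidx (psiA n j) (kap n r y)))"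
proof
  fix x assume x: "x \<in> balln n y r \<inter> space (PP n)"
  define j where "j = (\<lambda>i. if i < n then \<lfloor>x i / r\<rfloor> - \<lfloor>y i / r\<rfloor> else undefined)"
  have "\<bar>x i / r - y i / r\<bar> < 1" if "i < n" for i
    using ball_coord[of x n y r i] x that r by (simp add: diff_divide_distrib[symmetric] abs_divide)
  then have "j \<in> JA n"
    using floor_diff_small by (auto simp: JA_def j_def PiE_iff extensional_def)
  moreover have "x \<in> cuben n r (reidx (psiA n j) (kap n r y))"
    using x r by (intro in_cube_floor) (auto simp: reidx_def psiA_def kap_def j_def)
  ultimately show "x \<in> (\<Union>j\<in>JA n. cuben n r (reidx (psiA n j) (kap n r y)))" by blast
qed

lemma GB1:
  assumes n: "n \<ge> 1" and r: "r > 0"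
  shows "cuben n (r / n) (kap n (r / n) y) \<subseteq> balln n y r"
proof
  fix x assume x: "x \<in> cuben n (r / n) (kap n (r / n) y)"
  define \<rho> where "\<rho> = r / n"
  have \<rho>: "\<rho> > 0" using n r by (simp add: \<rho>_def)
  have d: "\<bar>x i - y i\<bar> < \<rho>" if i: "i < n" for i
  proof -
    have xi: "\<rho> * of_int \<lfloor>y i / \<rho>\<rfloor> \<le> x i" "x i < \<rho> * (of_int \<lfloor>y i / \<rho>\<rfloor> + 1)"
      using x i by (auto simp: cuben_def kap_def \<rho>_def)
    have "\<rho> * of_int \<lfloor>y i / \<rho>\<rfloor> \<le> y i" "y i < \<rho> * (of_int \<lfloor>y i / \<rho>\<rfloor> + 1)"
      using floor_in_cell[OF \<rho>, of "y i"] by auto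
    then show ?thesis using xi by (simp add: algebra_simps abs_less_iff)
  qed
  have "(\<Sum>i<n. (x i - y i)^2) < (\<Sum>i<n. \<rho>^2)"
  proof (rule sum_strict_mono)
    fix i assume "i \<in> {..<n}"
    then have "\<bar>x i - y i\<bar> < \<rho>" using d by auto
    then have "\<bar>x i - y i\<bar>^2 < \<rho>^2" by (intro power_strict_mono) auto
    then show "(x i - y i)^2 < \<rho>^2" by simp
  qed (use n in \<open>auto simp: lessThan_empty_iff\<close>)
  also have "\<dots> = n * \<rho>^2" by simp
  also have "\<dots> = r^2 / n" using n by (simp add: \<rho>_def power2_eq_square)
  also have "\<dots> \<le> r^2" using n r by (simp add: divide_le_eq)
  finally have "sqrt (\<Sum>i<n. (x i - y i)^2) < sqrt (r^2)" by (rule real_sqrt_less_mono)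
  then show "x \<in> balln n y r" using x r by (auto simp: balln_def cuben_def)
qed

definition Ms :: "nat \<Rightarrow> (nat \<Rightarrow> int) set" where
  "Ms n = PiE {..<n} (\<lambda>_. {0..<int n})"

definition phiB :: "nat \<Rightarrow> (nat \<Rightarrow> int) \<Rightarrow> nat \<Rightarrow> int \<Rightarrow> int" where
  "phiB n m = (\<lambda>i t. if i < n then int n * t + m i else t)"

lemma Ms_finite: "finite (Ms n)"
  unfolding Ms_def by (rule finite_PiE) auto

lemma phiB_inj: "n \<ge> 1 \<Longrightarrow> inj (phiB n m i)"
  by (auto simp: phiB_def inj_def)

lemma GB2:
  assumes n: "n \<ge> 1" and r: "r > 0"
  shows "cuben n r k \<inter> space (PP n) \<subseteq> (\<Union>m\<in>Ms n. cuben n (r / n) (reidx (phiB n m) k))"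
proof
  fix x assume x: "x \<in> cuben n r k \<inter> space (PP n)"
  define \<rho> where "\<rho> = r / n"
  have \<rho>: "\<rho> > 0" using n r by (simp add: \<rho>_def)
  define m where "m = (\<lambda>i. if i < n then \<lfloor>x i / \<rho>\<rfloor> - int n * k i else undefined)"
  have mi: "0 \<le> m i \<and> m i < int n" if i: "i < n" for i
  proof -
    have xi: "r * of_int (k i) \<le> x i" "x i < r * (of_int (k i) + 1)" using x i by (auto simp: cuben_def)
    have r_eq: "r = real n * \<rho>" using n by (simp add: \<rho>_def)
    have "real n * of_int (k i) * \<rho> \<le> x i" using xi(1) r_eq by (simp add: mult_ac)
    then have "real n * of_int (k i) \<le> x i / \<rho>" using \<rho> by (simp add: le_divide_eq)
    then have "int n * k i \<le> \<lfloor>x i / \<rho>\<rfloor>" by (simp add: le_floor_iff)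
    moreover have "x i < (real n * of_int (k i) + real n) * \<rho>" using xi(2) r_eq by (simp add: algebra_simps)
    then have "x i / \<rho> < real n * of_int (k i) + real n" using \<rho> by (simp add: divide_less_eq)
    then have "\<lfloor>x i / \<rho>\<rfloor> < int n * k i + int n" by (simp add: floor_less_iff)
    ultimately show ?thesis using i by (simp add: m_def)
  qed
  then have "m \<in> Ms n" by (auto simp: Ms_def m_def PiE_iff extensional_def)
  moreover have "x \<in> cuben n \<rho> (reidx (phiB n m) k)"
    using x \<rho> by (intro in_cube_floor) (auto simp: reidx_def phiB_def m_def)
  ultimately show "x \<in> (\<Union>m\<in>Ms n. cuben n (r / n) (reidx (phiB n m) k))" by (auto simp: \<rho>_def)
qed

lemma box_emeasure:
  assumes "\<And>i. i < n \<Longrightarrow> a i \<le> b i"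
  shows "emeasure (PP n) (PiE {..<n} (\<lambda>i. {a i..<b i})) = (\<Prod>i<n. ennreal (b i - a i))"
  using assms by (subst PPsf.emeasure_PiM) (auto intro!: prod.cong)

lemma ball_measure_bounds:
  assumes n: "n \<ge> 1" and r: "r > 0"
  shows "(r / n) ^ n \<le> measure (lebn n) (balln n y r) \<and> measure (lebn n) (balln n y r) \<le> (2 * r) ^ n"
proof -
  define \<delta> where "\<delta> = r / (2 * n)"
  have \<delta>: "\<delta> > 0" using n r by (simp add: \<delta>_def)
  define IB where "IB = PiE {..<n} (\<lambda>i. {y i - \<delta> ..< y i + \<delta>})"
  define OB where "OB = PiE {..<n} (\<lambda>i. {y i - r ..< y i + r})"
  have IBsub: "IB \<subseteq> balln n y r"
  proof
    fix x assume x: "x \<in> IB"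
    have d: "\<bar>x i - y i\<bar> \<le> \<delta>" if "i < n" for i
    proof -
      have "y i - \<delta> \<le> x i \<and> x i < y i + \<delta>" using x that by (auto simp: IB_def PiE_iff)
      then show ?thesis by (simp add: abs_le_iff)
    qed
    have "(\<Sum>i<n. (x i - y i)^2) \<le> (\<Sum>i<n. \<delta>^2)"
    proof (rule sum_mono)
      fix i assume "i \<in> {..<n}"
      then have "\<bar>x i - y i\<bar> \<le> \<delta>" using d by auto
      then have "\<bar>x i - y i\<bar>^2 \<le> \<delta>^2" by (intro power_mono) auto
      then show "(x i - y i)^2 \<le> \<delta>^2" by simp
    qed
    also have "\<dots> = n * \<delta>^2" by simp
    also have "\<dots> = r^2 / (4 * n)" using n by (simp add: \<delta>_def power2_eq_square)
    also have "\<dots> < r^2" using n r by (simp add: divide_less_eq)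
    finally have "sqrt (\<Sum>i<n. (x i - y i)^2) < sqrt (r^2)" by (rule real_sqrt_less_mono)
    then show "x \<in> balln n y r" using x r by (auto simp: balln_def IB_def PiE_iff)
  qed
  have OBsup: "balln n y r \<subseteq> OB"
  proof
    fix x assume x: "x \<in> balln n y r"
    have "y i - r \<le> x i \<and> x i < y i + r" if "i < n" for i
      using ball_coord[OF x that] by (auto simp: abs_less_iff)
    then show "x \<in> OB" using x by (auto simp: OB_def balln_def PiE_iff)
  qed
  have IBm: "emeasure (PP n) IB = ennreal ((r / n) ^ n)"
  proof -
    have "emeasure (PP n) IB = (\<Prod>i<n. ennreal (2 * \<delta>))"
      unfolding IB_def using \<delta> by (subst box_emeasure) auto
    also have "\<dots> = ennreal ((r / n) ^ n)"
      using n \<delta> by (simp add: \<delta>_def ennreal_power)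
    finally show ?thesis .
  qed
  have OBm: "emeasure (PP n) OB = ennreal ((2 * r) ^ n)"
  proof -
    have "emeasure (PP n) OB = (\<Prod>i<n. ennreal (2 * r))"
      unfolding OB_def using r by (subst box_emeasure) auto
    also have "\<dots> = ennreal ((2 * r) ^ n)"
      using r by (simp add: ennreal_power)
    finally show ?thesis .
  qed
  have OBs: "OB \<in> sets (PP n)" unfolding OB_def by (rule sets_PiM_I_finite) auto
  have Bs: "balln n y r \<in> sets (PP n)" by (rule ball_sets)
  have le1: "ennreal ((r / n) ^ n) \<le> emeasure (PP n) (balln n y r)"
    using IBm emeasure_mono[OF IBsub Bs] by simp
  have le2: "emeasure (PP n) (balln n y r) \<le> ennreal ((2 * r) ^ n)"
    using OBm emeasure_mono[OF OBsup OBs] by simp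
  have fin: "emeasure (PP n) (balln n y r) < top"
    using le2 by (simp add: le_less_trans)
  have meq: "measure (lebn n) (balln n y r) = enn2real (emeasure (PP n) (balln n y r))"
    unfolding lebn_def using Bs by (simp add: measure_def)
  have e: "emeasure (PP n) (balln n y r) = ennreal (measure (lebn n) (balln n y r))"
    using fin meq by (simp add: ennreal_enn2real_if less_top[symmetric])
  show ?thesis
    using le1 le2 r n unfolding e by (simp add: ennreal_le_iff)
qed

lemma weight_bounds:
  fixes e :: real
  assumes n: "n \<ge> 1" and r: "r > 0"
  defines "cw \<equiv> min (inverse (real n powr (real n * e))) (2 powr (real n * e))"
      and "Cw \<equiv> max (inverse (real n powr (real n * e))) (2 powr (real n * e))"
  shows "cw * r powr (real n * e) \<le> measure (lebn n) (balln n y r) powr e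
    \<and> measure (lebn n) (balln n y r) powr e \<le> Cw * r powr (real n * e)"
proof -
  define V where "V = measure (lebn n) (balln n y r)"
  define a where "a = (r / n) ^ n"
  define b where "b = (2 * r) ^ n"
  have ab: "a \<le> V" "V \<le> b" using ball_measure_bounds[OF n r, of y] by (auto simp: V_def a_def b_def)
  have a0: "a > 0" using n r by (simp add: a_def)
  have ae: "a powr e = inverse (real n powr (real n * e)) * r powr (real n * e)"
  proof -
    have "a powr e = ((r / n) powr real n) powr e" using n r by (simp add: a_def powr_realpow)
    also have "\<dots> = (r / n) powr (real n * e)" by (simp add: powr_powr)
    also have "\<dots> = r powr (real n * e) / real n powr (real n * e)"
      by (rule powr_divide)
    also have "\<dots> = inverse (real n powr (real n * e)) * r powr (real n * e)"
      by (simp add: divide_inverse mult.commute)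
    finally show ?thesis .
  qed
  have be: "b powr e = 2 powr (real n * e) * r powr (real n * e)"
  proof -
    have "b powr e = ((2 * r) powr real n) powr e" using n r by (simp add: b_def powr_realpow)
    also have "\<dots> = (2 * r) powr (real n * e)" by (simp add: powr_powr)
    also have "\<dots> = 2 powr (real n * e) * r powr (real n * e)"
      using r by (simp add: powr_mult)
    finally show ?thesis .
  qed
  have R: "r powr (real n * e) > 0" using r by simp
  show ?thesis
  proof (cases "e \<ge> 0")
    case True
    have "a powr e \<le> V powr e" "V powr e \<le> b powr e"
      using ab a0 True by (auto intro!: powr_mono2)
    moreover have "cw * r powr (real n * e) \<le> a powr e" unfolding ae cw_def
      using R by (intro mult_right_mono) auto
    moreover have "b powr e \<le> Cw * r powr (real n * e)" unfolding be Cw_def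
      using R by (intro mult_right_mono) auto
    ultimately show ?thesis unfolding V_def by linarith
  next
    case False
    have "b powr e \<le> V powr e" "V powr e \<le> a powr e"
      using ab a0 False by (auto intro!: powr_mono2')
    moreover have "cw * r powr (real n * e) \<le> b powr e" unfolding be cw_def
      using R by (intro mult_right_mono) auto
    moreover have "a powr e \<le> Cw * r powr (real n * e)" unfolding ae Cw_def
      using R by (intro mult_right_mono) auto
    ultimately show ?thesis unfolding V_def by linarith
  qed
qed

lemma rnorm_eq: "rnorm n p s r f = mixl n s (\<lambda>k. nf n p f (cuben n r k))"
  by (simp add: rnorm_def normL_ind)

lemma psiA_id: "i \<ge> n \<Longrightarrow> psiA n j i = id"
  by (auto simp: psiA_def fun_eq_iff)

lemma phiB_id: "i \<ge> n \<Longrightarrow> phiB n m i = id"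
  by (auto simp: phiB_def fun_eq_iff)

definition CA :: "nat \<Rightarrow> ennreal" where
  "CA n = (4 ^ n * (4 ^ n) ^ card (JA n)) * ((4 ^ n) ^ card (JA n) * of_nat (card (JA n)))"

definition CB :: "nat \<Rightarrow> ennreal" where
  "CB n = (4 ^ n * (4 ^ n) ^ card (Ms n)) * ((4 ^ n) ^ card (Ms n) * of_nat (card (Ms n)))"

lemma CA_fin: "CA n < top" by (simp add: CA_def ennreal_mult_less_top power_less_top_ennreal of_nat_less_top)
lemma CB_fin: "CB n < top" by (simp add: CB_def ennreal_mult_less_top power_less_top_ennreal of_nat_less_top)

lemma A_dir:
  assumes n: "n \<ge> 1" and p: "\<forall>i<n. 1 \<le> p i" and s: "\<forall>i<n. 1 \<le> s i"
    and f: "f \<in> borel_measurable (lebn n)"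
    and r: "r > 0" and c: "c < top" and w: "\<And>y. y \<in> space (PP n) \<Longrightarrow> w y \<le> c"
  shows "mixL n s (\<lambda>y. w y * nf n p f (balln n y r))
    \<le> ennreal (r powr (\<Sum>i<n. einv (s i))) * (c * CA n * mixl n s (\<lambda>k. nf n p f (cuben n r k)))"
proof -
  define a where "a = (\<lambda>k. nf n p f (cuben n r k))"
  define J where "J = JA n"
  define KA :: ennreal where "KA = 4 ^ n * (4 ^ n) ^ card J"
  have KA: "KA < top" by (simp add: KA_def ennreal_mult_less_top power_less_top_ennreal)
  define H where "H = (\<lambda>k. (c * KA) * (\<Sum>j\<in>J. a (reidx (psiA n j) k)))"
  have pt: "w y * nf n p f (balln n y r) \<le> H (kap n r y)" if y: "y \<in> space (PP n)" for y
  proof -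
    have "nf n p f (balln n y r) \<le> KA * (\<Sum>j\<in>J. a (reidx (psiA n j) (kap n r y)))"
      unfolding KA_def J_def a_def
      by (rule COVER[OF f p JA_finite cube_sets GA[OF r]])
    then show ?thesis unfolding H_def using w[OF y]
      by (simp add: mult.assoc mult_mono)
  qed
  have "mixL n s (\<lambda>y. w y * nf n p f (balln n y r)) \<le> mixL n s (\<lambda>y. H (kap n r y))"
    unfolding mixL_def by (rule L_mono[OF pt s le_refl origin_space])
  also have "\<dots> = ennreal (r powr (\<Sum>i<n. einv (s i))) * mixl n s H"
    by (rule L_step_top[OF r s])
  also have "mixl n s H = (c * KA) * mixl n s (\<lambda>k. \<Sum>j\<in>J. a (reidx (psiA n j) k))"
    unfolding H_def mixl_def
    by (rule D_cmult) (use c KA s in \<open>auto simp: ennreal_mult_less_top\<close>)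
  also have "mixl n s (\<lambda>k. \<Sum>j\<in>J. a (reidx (psiA n j) k))
      \<le> (4 ^ n) ^ card J * (\<Sum>j\<in>J. mixl n s (\<lambda>k. a (reidx (psiA n j) k)))"
    unfolding mixl_def by (rule D_sum[OF _ s]) (simp add: J_def JA_finite)
  also have "(\<Sum>j\<in>J. mixl n s (\<lambda>k. a (reidx (psiA n j) k))) \<le> (\<Sum>j\<in>J. mixl n s a)"
    by (intro sum_mono D_reindex_top[OF psiA_inj s psiA_id])
  also have "(\<Sum>j\<in>J. mixl n s a) = of_nat (card J) * mixl n s a" by simp
  finally show ?thesis
    by (simp add: CA_def KA_def J_def a_def mult_ac mult_left_mono mult_right_mono)
qed

lemma B_dir:
  assumes n: "n \<ge> 1" and p: "\<forall>i<n. 1 \<le> p i" and s: "\<forall>i<n. 1 \<le> s i"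
    and f: "f \<in> borel_measurable (lebn n)"
    and r: "r > 0" and c: "c < top" and w: "\<And>y. y \<in> space (PP n) \<Longrightarrow> c \<le> w y"
  shows "ennreal ((r / n) powr (\<Sum>i<n. einv (s i))) * (c * mixl n s (\<lambda>k. nf n p f (cuben n r k)))
    \<le> CB n * mixL n s (\<lambda>y. w y * nf n p f (balln n y r))"
proof -
  define \<rho> where "\<rho> = r / n"
  have \<rho>: "\<rho> > 0" using n r by (simp add: \<rho>_def)
  define a where "a = (\<lambda>k. nf n p f (cuben n r k))"
  define a' where "a' = (\<lambda>k. nf n p f (cuben n \<rho> k))"
  define M where "M = Ms n"
  define KB :: ennreal where "KB = 4 ^ n * (4 ^ n) ^ card M"
  have KB: "KB < top" by (simp add: KB_def ennreal_mult_less_top power_less_top_ennreal)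
  have ak: "a k \<le> KB * (\<Sum>m\<in>M. a' (reidx (phiB n m) k))" for k
    unfolding KB_def M_def a_def a'_def \<rho>_def
    by (rule COVER[OF f p Ms_finite cube_sets GB2[OF n r]])
  have "mixl n s a \<le> mixl n s (\<lambda>k. KB * (\<Sum>m\<in>M. a' (reidx (phiB n m) k)))"
    unfolding mixl_def by (rule D_mono[OF ak s])
  also have "\<dots> = KB * mixl n s (\<lambda>k. \<Sum>m\<in>M. a' (reidx (phiB n m) k))"
    unfolding mixl_def by (rule D_cmult[OF KB s])
  also have "mixl n s (\<lambda>k. \<Sum>m\<in>M. a' (reidx (phiB n m) k))
      \<le> (4 ^ n) ^ card M * (\<Sum>m\<in>M. mixl n s (\<lambda>k. a' (reidx (phiB n m) k)))"
    unfolding mixl_def by (rule D_sum[OF _ s]) (simp add: M_def Ms_finite)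
  also have "(\<Sum>m\<in>M. mixl n s (\<lambda>k. a' (reidx (phiB n m) k))) \<le> (\<Sum>m\<in>M. mixl n s a')"
    by (intro sum_mono D_reindex_top[OF phiB_inj[OF n] s phiB_id])
  also have "(\<Sum>m\<in>M. mixl n s a') = of_nat (card M) * mixl n s a'" by simp
  finally have disc: "mixl n s a \<le> CB n * mixl n s a'"
    by (simp add: CB_def KB_def M_def mult_ac mult_left_mono mult_right_mono)
  have pt: "c * a' (kap n \<rho> y) \<le> w y * nf n p f (balln n y r)" if y: "y \<in> space (PP n)" for y
  proof -
    have "a' (kap n \<rho> y) \<le> nf n p f (balln n y r)"
      unfolding a'_def \<rho>_def using GB1[OF n r, of y] by (intro NF_mono[OF _ p]) auto
    then show ?thesis using w[OF y] by (intro mult_mono) auto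
  qed
  have "ennreal (\<rho> powr (\<Sum>i<n. einv (s i))) * (c * mixl n s a') = mixL n s (\<lambda>y. c * a' (kap n \<rho> y))"
    using L_step_top[OF \<rho> s, of "\<lambda>k. c * a' k"] D_cmult[OF c s, of a' "origin n"]
    by (simp add: mixl_def)
  also have "\<dots> \<le> mixL n s (\<lambda>y. w y * nf n p f (balln n y r))"
    unfolding mixL_def by (rule L_mono[OF pt s le_refl origin_space])
  finally have cont: "ennreal (\<rho> powr (\<Sum>i<n. einv (s i))) * (c * mixl n s a') \<le> mixL n s (\<lambda>y. w y * nf n p f (balln n y r))" .
  have "ennreal (\<rho> powr (\<Sum>i<n. einv (s i))) * (c * mixl n s a)
      \<le> ennreal (\<rho> powr (\<Sum>i<n. einv (s i))) * (c * (CB n * mixl n s a'))"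
    using disc by (intro mult_left_mono) auto
  also have "\<dots> = CB n * (ennreal (\<rho> powr (\<Sum>i<n. einv (s i))) * (c * mixl n s a'))"
    by (simp add: mult_ac)
  also have "\<dots> \<le> CB n * mixL n s (\<lambda>y. w y * nf n p f (balln n y r))"
    using cont by (intro mult_left_mono) auto
  finally show ?thesis by (simp add: a_def \<rho>_def)
qed

lemma fin_from_le:
  fixes q :: real and D X :: ennreal
  assumes "q > 0" "ennreal q * D \<le> X" "X < top"
  shows "D < top"
proof (rule ccontr)
  assume "\<not> D < top"
  then have "D = top" by (simp add: less_top[symmetric])
  then have "ennreal q * D = top" using assms(1) by (simp add: ennreal_mult_top)
  then show False using assms(2,3) by (simp add: top_unique)
qed

lemma part1:
  assumes n: "n \<ge> 1" and p: "\<forall>i<n. 1 \<le> p i" and s: "\<forall>i<n. 1 \<le> s i"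
    and f: "f \<in> borel_measurable (lebn n)"
  shows "mixL n s (\<lambda>y. nf n p f (balln n y 1)) < top \<longleftrightarrow> mixl n s (\<lambda>k. nf n p f (cuben n 1 k)) < top"
proof -
  let ?C = "mixL n s (\<lambda>y. nf n p f (balln n y 1))"
  let ?D = "mixl n s (\<lambda>k. nf n p f (cuben n 1 k))"
  have A: "?C \<le> CA n * ?D"
    using A_dir[OF n p s f, of 1 1 "\<lambda>_. 1"] by simp
  have B: "ennreal ((1 / n) powr (\<Sum>i<n. einv (s i))) * ?D \<le> CB n * ?C"
    using B_dir[OF n p s f, of 1 1 "\<lambda>_. 1"] by simp
  show ?thesis
  proof
    assume "?C < top"
    then have "CB n * ?C < top" using CB_fin by (simp add: ennreal_mult_less_top)
    then show "?D < top" using fin_from_le[OF _ B] n by simp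
  next
    assume "?D < top"
    then have "CA n * ?D < top" using CA_fin by (simp add: ennreal_mult_less_top)
    then show "?C < top" using A by (simp add: le_less_trans)
  qed
qed

lemma part2:
  fixes \<alpha> :: ennreal
  assumes n: "n \<ge> 1" and p: "\<forall>i<n. 1 \<le> p i" and s: "\<forall>i<n. 1 \<le> s i"
    and f: "f \<in> borel_measurable (lebn n)"
  defines "e \<equiv> einv \<alpha> - (\<Sum>i<n. einv (p i)) / real n - (\<Sum>i<n. einv (s i)) / real n"
  shows "(SUP r\<in>{0<..}. mixL n s (\<lambda>y. ennreal (measure (lebn n) (balln n y r) powr e)
            * nf n p f (balln n y r))) < top
    \<longleftrightarrow> (SUP r\<in>{0<..}. ennreal (r powr (real n * einv \<alpha> - (\<Sum>i<n. einv (p i))))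
            * mixl n s (\<lambda>k. nf n p f (cuben n r k))) < top"
proof -
  define \<sigma> where "\<sigma> = (\<Sum>i<n. einv (s i))"
  define \<beta> where "\<beta> = real n * einv \<alpha> - (\<Sum>i<n. einv (p i))"
  have \<beta>: "real n * e + \<sigma> = \<beta>" using n by (simp add: e_def \<sigma>_def \<beta>_def field_simps)
  define cw where "cw = min (inverse (real n powr (real n * e))) (2 powr (real n * e))"
  define Cw where "Cw = max (inverse (real n powr (real n * e))) (2 powr (real n * e))"
  have cw: "cw > 0" using n by (simp add: cw_def)
  have Cw: "Cw > 0" using n by (simp add: Cw_def less_max_iff_disj)
  define C where "C r = mixL n s (\<lambda>y. ennreal (measure (lebn n) (balln n y r) powr e) * nf n p f (balln n y r))" for r
  define D where "D r = ennreal (r powr \<beta>) * mixl n s (\<lambda>k. nf n p f (cuben n r k))" for r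
  have CD: "C r \<le> (ennreal Cw * CA n) * D r" if r: "r > 0" for r
  proof -
    have w: "ennreal (measure (lebn n) (balln n y r) powr e) \<le> ennreal (Cw * r powr (real n * e))" for y
      using weight_bounds[OF n r, of e y] by (intro ennreal_leI) (simp add: Cw_def)
    have "C r \<le> ennreal (r powr \<sigma>) * (ennreal (Cw * r powr (real n * e)) * CA n * mixl n s (\<lambda>k. nf n p f (cuben n r k)))"
      unfolding C_def \<sigma>_def by (rule A_dir[OF n p s f r]) (use w in auto)
    also have "ennreal (r powr \<sigma>) * (ennreal (Cw * r powr (real n * e)) * CA n * mixl n s (\<lambda>k. nf n p f (cuben n r k)))
        = (ennreal Cw * CA n) * (ennreal (r powr \<sigma> * r powr (real n * e)) * mixl n s (\<lambda>k. nf n p f (cuben n r k)))"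
      using Cw by (simp add: ennreal_mult mult_ac)
    also have "r powr \<sigma> * r powr (real n * e) = r powr \<beta>"
      using \<beta> by (simp add: powr_add[symmetric] add.commute)
    finally show ?thesis by (simp add: D_def)
  qed
  define D0 where "D0 = cw / real n powr \<sigma>"
  have D0: "D0 > 0" using cw n by (simp add: D0_def)
  have DC: "ennreal D0 * D r \<le> CB n * C r" if r: "r > 0" for r
  proof -
    have w: "ennreal (cw * r powr (real n * e)) \<le> ennreal (measure (lebn n) (balln n y r) powr e)"
      if "y \<in> space (PP n)" for y
      using weight_bounds[OF n r, of e y] by (intro ennreal_leI) (simp add: cw_def)
    have "ennreal ((r / n) powr \<sigma>) * (ennreal (cw * r powr (real n * e)) * mixl n s (\<lambda>k. nf n p f (cuben n r k)))
        \<le> CB n * C r"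
      unfolding C_def \<sigma>_def by (rule B_dir[OF n p s f r]) (use w in auto)
    moreover have "ennreal ((r / n) powr \<sigma>) * (ennreal (cw * r powr (real n * e)) * mixl n s (\<lambda>k. nf n p f (cuben n r k)))
        = ennreal D0 * D r"
    proof -
      have "(r / n) powr \<sigma> * (cw * r powr (real n * e)) = D0 * r powr \<beta>"
        using \<beta>[symmetric] r n
        by (simp add: D0_def powr_divide powr_add field_simps)
      then show ?thesis using cw r
        by (simp add: D_def ennreal_mult[symmetric] mult.assoc[symmetric] D0_def)
    qed
    ultimately show ?thesis by simp
  qed
  have "(SUP r\<in>{0<..}. C r) < top \<longleftrightarrow> (SUP r\<in>{0<..}. D r) < top"
  proof
    assume fin: "(SUP r\<in>{0<..}. C r) < top"
    have "(SUP r\<in>{0<..}. D r) \<le> ennreal (1 / D0) * CB n * (SUP r\<in>{0<..}. C r)"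
    proof (rule SUP_least)
      fix r :: real assume "r \<in> {0<..}"
      then have r: "r > 0" by simp
      have "D r = ennreal (1 / D0) * (ennreal D0 * D r)"
        using D0 by (simp add: mult.assoc[symmetric] ennreal_mult[symmetric])
      also have "\<dots> \<le> ennreal (1 / D0) * (CB n * C r)"
        using DC[OF r] by (rule mult_left_mono) simp
      also have "\<dots> \<le> ennreal (1 / D0) * (CB n * (SUP r\<in>{0<..}. C r))"
        using r by (intro mult_left_mono SUP_upper) auto
      finally show "D r \<le> ennreal (1 / D0) * CB n * (SUP r\<in>{0<..}. C r)" by (simp add: mult.assoc)
    qed
    also have "\<dots> < top" using fin CB_fin by (simp add: ennreal_mult_less_top)
    finally show "(SUP r\<in>{0<..}. D r) < top" .
  next
    assume fin: "(SUP r\<in>{0<..}. D r) < top"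
    have "(SUP r\<in>{0<..}. C r) \<le> (ennreal Cw * CA n) * (SUP r\<in>{0<..}. D r)"
    proof (rule SUP_least)
      fix r :: real assume "r \<in> {0<..}"
      then have r: "r > 0" by simp
      have "C r \<le> (ennreal Cw * CA n) * D r" by (rule CD[OF r])
      also have "\<dots> \<le> (ennreal Cw * CA n) * (SUP r\<in>{0<..}. D r)"
        using r by (intro mult_left_mono SUP_upper) auto
      finally show "C r \<le> (ennreal Cw * CA n) * (SUP r\<in>{0<..}. D r)" .
    qed
    also have "\<dots> < top" using fin CA_fin by (simp add: ennreal_mult_less_top)
    finally show "(SUP r\<in>{0<..}. C r) < top" .
  qed
  then show ?thesis by (simp add: C_def D_def \<beta>_def)
qed

theorem proposition2p5:
  fixes n :: nat and p s :: "nat \<Rightarrow> ennreal" and \<alpha> :: ennreal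
  assumes "n \<ge> 1"
    and "\<forall>i<n. 1 \<le> p i" and "\<forall>i<n. 1 \<le> s i"
    and "1 \<le> \<alpha>"
    and "(\<Sum>i<n. einv (s i)) / real n \<le> einv \<alpha>"
    and "einv \<alpha> \<le> (\<Sum>i<n. einv (p i)) / real n"
  shows "amalgamLL n p s = amalgamLl n p s \<and> amalgamLL_alpha n p s \<alpha> = amalgamLl_alpha n p s \<alpha>"
proof
  show "amalgamLL n p s = amalgamLl n p s"
  proof (intro set_eqI)
    fix f
    show "f \<in> amalgamLL n p s \<longleftrightarrow> f \<in> amalgamLl n p s"
    proof (cases "L1_loc n f")
      case True
      then have f: "f \<in> borel_measurable (lebn n)" by (simp add: L1_loc_def)
      show ?thesis using part1[OF assms(1-3) f] True
        by (simp add: amalgamLL_def amalgamLl_def normL_ind rnorm_eq)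
    next
      case False then show ?thesis by (simp add: amalgamLL_def amalgamLl_def)
    qed
  qed
next
  show "amalgamLL_alpha n p s \<alpha> = amalgamLl_alpha n p s \<alpha>"
  proof (intro set_eqI)
    fix f
    show "f \<in> amalgamLL_alpha n p s \<alpha> \<longleftrightarrow> f \<in> amalgamLl_alpha n p s \<alpha>"
    proof (cases "L1_loc n f")
      case True
      then have f: "f \<in> borel_measurable (lebn n)" by (simp add: L1_loc_def)
      show ?thesis using part2[OF assms(1-3) f, of \<alpha>] True
        by (simp add: amalgamLL_alpha_def amalgamLl_alpha_def normL_ind rnorm_eq)
    next
      case False then show ?thesis by (simp add: amalgamLL_alpha_def amalgamLl_alpha_def)
    qed
  qed
qed

end
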